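(* Let $\mu>0$, $\sigma>0$, $0\le \beta<\mu<\alpha$ and $0<v_0<x_0<u_0$. For $\epsilon>0$ let $\{X^\epsilon_t\}_{t\ge0}$ be the solution of the SDE $$dX^\epsilon_t=\mu X^\epsilon_t\,dt+\sqrt{\epsilon}\,\sigma\,dW_t,\qquad X^\epsilon_0=x_0,$$ where $\{W_t\}$ is a standard Brownian motion. Let $V(t)=v_0e^{\beta t}$ and $U(t)=u_0e^{\alpha t}$, and fix $T>0$. (i) Let $t^o_V$ be the unique positive solution of $$\phi_V(t):=\Big(1-\frac{\beta}{\mu}\Big)e^{(\mu+\beta)t}+\frac{\beta}{\mu}e^{(\beta-\mu)t}=\frac{x_0}{v_0}.$$ Then $$\lim_{\epsilon\to0}\epsilon\log\mathbb{P}\Big(\min_{t\in[0,T]}\big(X^\epsilon_t-V(t)\big)\le 0\Big)=-I_V(T),\qquad I_V(T)=\frac{\mu}{\sigma^2}\,\frac{\big(v_0e^{\beta(T\wedge t^o_V)}-x_0e^{\mu(T\wedge t^o_V)}\big)^2}{e^{2\mu(T\wedge t^o_V)}-1}.$$ (ii) Let $t^o_U$ be the unique positive solution of $$\phi_U(t):=\frac{\alpha}{\mu}e^{(\alpha-\mu)t}-\Big(\frac{\alpha}{\mu}-1\Big)e^{(\mu+\alpha)t}=\frac{x_0}{u_0}.$$ Then $$\lim_{\epsilon\to0}\epsilon\log\mathbb{P}\Big(\max_{t\in[0,T]}\big(X^\epsilon_t-U(t)\big)\ge 0\Big)=-I_U(T),\qquad I_U(T)=\frac{\mu}{\sigma^2}\,\frac{\big(u_0e^{\alpha(T\wedge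 t^o_U)}-x_0e^{\mu(T\wedge t^o_U)}\big)^2}{e^{2\mu(T\wedge t^o_U)}-1}.$$
   Context: $a\wedge b=\min(a,b)$. The solutions $t^o_V$, $t^o_U$ of the displayed equations are asserted to exist and be unique as part of the statement. *)

theory Defs
  imports "HOL-Probability.Probability"
begin

definition std_brownian_motion :: "'a measure \<Rightarrow> (real \<Rightarrow> 'a \<Rightarrow> real) \<Rightarrow> bool" where
  "std_brownian_motion M W \<longleftrightarrow>
     prob_space M \<and>
     (\<forall>t. W t \<in> borel_measurable M) \<and>
     (\<forall>\<omega>\<in>space M. W 0 \<omega> = 0 \<and> continuous_on {0..} (\<lambda>t. W t \<omega>)) \<and>
     (\<forall>s t. 0 \<le> s \<and> s < t \<longrightarrow>
        distributed M lborel (\<lambda>\<omega>. W t \<omega> - W s \<omega>) (normal_density 0 (sqrt (t - s)))) \<and>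
     (\<forall>(ts::nat \<Rightarrow> real) n. 0 \<le> ts 0 \<and> (\<forall>i<n. ts i < ts (Suc i)) \<longrightarrow>
        prob_space.indep_vars M (\<lambda>_. borel) (\<lambda>i \<omega>. W (ts (Suc i)) \<omega> - W (ts i) \<omega>) {..<n})"

text \<open>X is a (pathwise) solution of dX = mu X dt + sqrt eps sigma dW, X 0 = x0.
  Since the diffusion coefficient is constant, the SDE in integral form involves
  only an ordinary (pathwise) time integral.\<close>
definition solves_linear_sde ::
  "'a measure \<Rightarrow> (real \<Rightarrow> 'a \<Rightarrow> real) \<Rightarrow> real \<Rightarrow> real \<Rightarrow> real \<Rightarrow> real \<Rightarrow> (real \<Rightarrow> 'a \<Rightarrow> real) \<Rightarrow> bool" where
  "solves_linear_sde M W \<mu> \<sigma> \<epsilon> x0 X \<longleftrightarrow>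
     (\<forall>t. X t \<in> borel_measurable M) \<and>
     (\<forall>\<omega>\<in>space M. continuous_on {0..} (\<lambda>t. X t \<omega>) \<and>
        (\<forall>t\<ge>0. X t \<omega> = x0 + integral {0..t} (\<lambda>s. \<mu> * X s \<omega>) + sqrt \<epsilon> * \<sigma> * W t \<omega>))"

definition phi_V :: "real \<Rightarrow> real \<Rightarrow> real \<Rightarrow> real" where
  "phi_V \<mu> \<beta> t = (1 - \<beta>/\<mu>) * exp ((\<mu> + \<beta>) * t) + (\<beta>/\<mu>) * exp ((\<beta> - \<mu>) * t)"

definition phi_U :: "real \<Rightarrow> real \<Rightarrow> real \<Rightarrow> real" where
  "phi_U \<mu> \<alpha> t = (\<alpha>/\<mu>) * exp ((\<alpha> - \<mu>) * t) - (\<alpha>/\<mu> - 1) * exp ((\<mu> + \<alpha>) * t)"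

definition rate_fn :: "real \<Rightarrow> real \<Rightarrow> real \<Rightarrow> real \<Rightarrow> real \<Rightarrow> real \<Rightarrow> real" where
  "rate_fn \<mu> \<sigma> x0 c \<gamma> s =
     \<mu> / \<sigma>\<^sup>2 * (c * exp (\<gamma> * s) - x0 * exp (\<mu> * s))\<^sup>2 / (exp (2 * \<mu> * s) - 1)"

end

theory Submission
  imports Defs
begin

lemma normal_mgf:
  fixes s :: real assumes s: "s > 0"
  shows "has_bochner_integral lborel (\<lambda>x. normal_density 0 s x * exp (\<theta> * x)) (exp (\<theta>\<^sup>2 * s\<^sup>2 / 2))"
proof -
  have eq: "normal_density 0 s x * exp (\<theta> * x) = exp (\<theta>\<^sup>2 * s\<^sup>2 / 2) * normal_density (\<theta> * s\<^sup>2) s x" for x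
  proof -
    have "-(x - 0)\<^sup>2 / (2 * s\<^sup>2) + \<theta> * x = \<theta>\<^sup>2 * s\<^sup>2 / 2 + (-(x - \<theta> * s\<^sup>2)\<^sup>2 / (2 * s\<^sup>2))"
      using s by (simp add: field_simps power2_eq_square)
    then show ?thesis unfolding normal_density_def
      by (simp add: exp_add[symmetric] mult_ac)
  qed
  have "has_bochner_integral lborel (normal_density (\<theta> * s\<^sup>2) s) 1"
    using has_bochner_integral_integrable[OF integrable_normal_density, of s "\<theta> * s\<^sup>2"] s by simp
  then have "has_bochner_integral lborel (\<lambda>x. exp (\<theta>\<^sup>2 * s\<^sup>2 / 2) * normal_density (\<theta> * s\<^sup>2) s x) (exp (\<theta>\<^sup>2 * s\<^sup>2 / 2) * 1)"
    by (rule has_bochner_integral_mult_right)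
  then show ?thesis by (simp add: eq)
qed

locale bm_ctx =
  fixes M :: "'a measure" and W :: "real \<Rightarrow> 'a \<Rightarrow> real"
  assumes BM: "std_brownian_motion M W"
begin

lemma ps: "prob_space M" using BM by (simp add: std_brownian_motion_def)

sublocale prob_space M by (rule ps)

lemma W_meas[measurable]: "W t \<in> borel_measurable M"
  using BM by (simp add: std_brownian_motion_def)

lemma W0: "\<omega> \<in> space M \<Longrightarrow> W 0 \<omega> = 0"
  using BM by (simp add: std_brownian_motion_def)

lemma W_cont: "\<omega> \<in> space M \<Longrightarrow> continuous_on {0..} (\<lambda>t. W t \<omega>)"
  using BM by (simp add: std_brownian_motion_def)

lemma inc_distr: "0 \<le> s \<Longrightarrow> s < t \<Longrightarrow>
  distributed M lborel (\<lambda>\<omega>. W t \<omega> - W s \<omega>) (normal_density 0 (sqrt (t - s)))"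
  using BM by (simp add: std_brownian_motion_def)

lemma inc_indep: "0 \<le> ts 0 \<Longrightarrow> (\<And>i. i < n \<Longrightarrow> ts i < ts (Suc i)) \<Longrightarrow>
  indep_vars (\<lambda>_. borel) (\<lambda>i \<omega>. W (ts (Suc i)) \<omega> - W (ts i) \<omega>) {..<n}"
  using BM unfolding std_brownian_motion_def by blast

lemma inc_mgf:
  assumes "0 \<le> s" "s < t"
  shows "integrable M (\<lambda>\<omega>. exp (\<theta> * (W t \<omega> - W s \<omega>)))"
    and "expectation (\<lambda>\<omega>. exp (\<theta> * (W t \<omega> - W s \<omega>))) = exp (\<theta>\<^sup>2 * (t - s) / 2)"
proof -
  let ?s = "sqrt (t - s)"
  have sp: "?s > 0" using assms by simp
  have D: "distributed M lborel (\<lambda>\<omega>. W t \<omega> - W s \<omega>) (normal_density 0 ?s)"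
    using inc_distr assms by blast
  have hb: "has_bochner_integral lborel (\<lambda>x. normal_density 0 ?s x * exp (\<theta> * x)) (exp (\<theta>\<^sup>2 * ?s\<^sup>2 / 2))"
    by (rule normal_mgf[OF sp])
  have "integrable lborel (\<lambda>x. normal_density 0 ?s x * exp (\<theta> * x))"
    using hb by (rule integrable.intros)
  then show "integrable M (\<lambda>\<omega>. exp (\<theta> * (W t \<omega> - W s \<omega>)))"
    using distributed_integrable[OF D, of "\<lambda>x. exp (\<theta> * x)"] by simp
  have "expectation (\<lambda>\<omega>. exp (\<theta> * (W t \<omega> - W s \<omega>))) = (\<integral>x. normal_density 0 ?s x * exp (\<theta> * x) \<partial>lborel)"
    using distributed_integral[OF D, of "\<lambda>x. exp (\<theta> * x)"] by simp
  also have "\<dots> = exp (\<theta>\<^sup>2 * ?s\<^sup>2 / 2)" using hb by (simp add: has_bochner_integral_iff)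
  finally show "expectation (\<lambda>\<omega>. exp (\<theta> * (W t \<omega> - W s \<omega>))) = exp (\<theta>\<^sup>2 * (t - s) / 2)"
    using assms by simp
qed

end

context bm_ctx begin

lemma normal_density_mono:
  assumes "\<bar>x\<bar> \<le> m" shows "normal_density 0 s m \<le> normal_density 0 s x"
proof -
  have "x\<^sup>2 \<le> m\<^sup>2" using assms by (metis abs_le_square_iff abs_of_nonneg abs_ge_zero order_trans)
  then have "-(m - 0)\<^sup>2 / (2 * s\<^sup>2) \<le> -(x - 0)\<^sup>2 / (2 * s\<^sup>2)"
    by (simp add: divide_right_mono)
  then show ?thesis unfolding normal_density_def
    by (intro mult_left_mono) auto
qed

lemma inc_interval_lower:
  assumes "0 \<le> s" "s < t" "a \<le> b" "\<And>x. a \<le> x \<Longrightarrow> x \<le> b \<Longrightarrow> \<bar>x\<bar> \<le> m"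
  shows "(b - a) * normal_density 0 (sqrt (t - s)) m \<le> prob {\<omega> \<in> space M. a \<le> W t \<omega> - W s \<omega> \<and> W t \<omega> - W s \<omega> \<le> b}"
proof -
  let ?f = "normal_density 0 (sqrt (t - s))"
  have D: "distributed M lborel (\<lambda>\<omega>. W t \<omega> - W s \<omega>) ?f"
    using inc_distr assms by blast
  have eq: "{\<omega> \<in> space M. a \<le> W t \<omega> - W s \<omega> \<and> W t \<omega> - W s \<omega> \<le> b} = (\<lambda>\<omega>. W t \<omega> - W s \<omega>) -` {a..b} \<inter> space M"
    by auto
  have "(\<integral>\<^sup>+x. ennreal (?f m) * indicator {a..b} x \<partial>lborel) = ennreal (?f m) * emeasure lborel {a..b}"
    by (rule nn_integral_cmult_indicator) simp
  also have "\<dots> = ennreal (?f m) * ennreal (b - a)"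
    using assms(3) by simp
  also have "\<dots> = ennreal ((b - a) * ?f m)"
    using assms(3) by (simp add: ennreal_mult[symmetric] mult.commute)
  finally have 1: "ennreal ((b - a) * ?f m) = (\<integral>\<^sup>+x. ennreal (?f m) * indicator {a..b} x \<partial>lborel)" by simp
  have 2: "(\<integral>\<^sup>+x. ennreal (?f m) * indicator {a..b} x \<partial>lborel) \<le> (\<integral>\<^sup>+x. ennreal (?f x) * indicator {a..b} x \<partial>lborel)"
  proof (rule nn_integral_mono)
    fix x show "ennreal (?f m) * indicator {a..b} x \<le> ennreal (?f x) * indicator {a..b} x"
    proof (cases "x \<in> {a..b}")
      case True
      then have "?f m \<le> ?f x" using assms(4)[of x] by (intro normal_density_mono) auto
      then show ?thesis using True by (simp add: ennreal_leI)
    qed simp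
  qed
  have 3: "(\<integral>\<^sup>+x. ennreal (?f x) * indicator {a..b} x \<partial>lborel) = emeasure M ((\<lambda>\<omega>. W t \<omega> - W s \<omega>) -` {a..b} \<inter> space M)"
    using distributed_emeasure[OF D, of "{a..b}"] by simp
  have 4: "emeasure M ((\<lambda>\<omega>. W t \<omega> - W s \<omega>) -` {a..b} \<inter> space M) = ennreal (prob {\<omega> \<in> space M. a \<le> W t \<omega> - W s \<omega> \<and> W t \<omega> - W s \<omega> \<le> b})"
    unfolding eq by (rule emeasure_eq_measure)
  have "ennreal ((b - a) * ?f m) \<le> ennreal (prob {\<omega> \<in> space M. a \<le> W t \<omega> - W s \<omega> \<and> W t \<omega> - W s \<omega> \<le> b})"
    using 1 2 3 4 by simp
  then show ?thesis by (rule ennreal_le_iff[THEN iffD1, rotated]) simp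
qed

lemma grid_indep:
  assumes "0 \<le> ts 0" "\<And>i. i < n \<Longrightarrow> ts i < ts (Suc i)"
  shows "indep_vars (\<lambda>_. borel) (\<lambda>i \<omega>. exp (c i * (W (ts (Suc i)) \<omega> - W (ts i) \<omega>))) {..<n}"
proof -
  have "indep_vars (\<lambda>_. borel) (\<lambda>i x. (\<lambda>i y. exp (c i * y)) i (W (ts (Suc i)) x - W (ts i) x)) {..<n}"
    by (rule indep_vars_compose2[OF inc_indep[OF assms]]) measurable
  then show ?thesis by simp
qed

lemma grid_pos: fixes ts :: "nat \<Rightarrow> real" shows "0 \<le> ts 0 \<Longrightarrow> (\<And>i. i < n \<Longrightarrow> ts i < ts (Suc i)) \<Longrightarrow> i \<le> n \<Longrightarrow> 0 \<le> ts i"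
proof (induction i)
  case (Suc i)
  then have "i < n" by simp
  then have "ts i < ts (Suc i)" using Suc.prems(2) by simp
  moreover have "0 \<le> ts i" using Suc by simp
  ultimately show ?case by linarith
qed simp

lemma grid_mgf:
  assumes "0 \<le> ts 0" "\<And>i. i < n \<Longrightarrow> ts i < ts (Suc i)"
  shows "integrable M (\<lambda>\<omega>. exp (\<Sum>i<n. c i * (W (ts (Suc i)) \<omega> - W (ts i) \<omega>)))"
    and "expectation (\<lambda>\<omega>. exp (\<Sum>i<n. c i * (W (ts (Suc i)) \<omega> - W (ts i) \<omega>)))
         = exp ((\<Sum>i<n. (c i)\<^sup>2 * (ts (Suc i) - ts i)) / 2)"
proof -
  have int: "integrable M (\<lambda>\<omega>. exp (c i * (W (ts (Suc i)) \<omega> - W (ts i) \<omega>)))" if "i \<in> {..<n}" for i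
    using inc_mgf(1)[of "ts i" "ts (Suc i)" "c i"] grid_pos[OF assms, of i] assms(2)[of i] that by auto
  have ex: "expectation (\<lambda>\<omega>. exp (c i * (W (ts (Suc i)) \<omega> - W (ts i) \<omega>))) = exp ((c i)\<^sup>2 * (ts (Suc i) - ts i) / 2)"
    if "i \<in> {..<n}" for i
    using inc_mgf(2)[of "ts i" "ts (Suc i)" "c i"] grid_pos[OF assms, of i] assms(2)[of i] that by auto
  have e: "exp (\<Sum>i<n. c i * (W (ts (Suc i)) \<omega> - W (ts i) \<omega>)) = (\<Prod>i<n. exp (c i * (W (ts (Suc i)) \<omega> - W (ts i) \<omega>)))" for \<omega>
    by (simp add: exp_sum)
  show "integrable M (\<lambda>\<omega>. exp (\<Sum>i<n. c i * (W (ts (Suc i)) \<omega> - W (ts i) \<omega>)))"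
    unfolding e by (rule indep_vars_integrable[OF _ grid_indep[OF assms] int]) auto
  have "expectation (\<lambda>\<omega>. exp (\<Sum>i<n. c i * (W (ts (Suc i)) \<omega> - W (ts i) \<omega>)))
     = (\<Prod>i<n. expectation (\<lambda>\<omega>. exp (c i * (W (ts (Suc i)) \<omega> - W (ts i) \<omega>))))"
    unfolding e by (rule indep_vars_lebesgue_integral[OF _ grid_indep[OF assms] int]) auto
  also have "\<dots> = (\<Prod>i<n. exp ((c i)\<^sup>2 * (ts (Suc i) - ts i) / 2))"
    by (rule prod.cong) (auto simp: ex)
  also have "\<dots> = exp ((\<Sum>i<n. (c i)\<^sup>2 * (ts (Suc i) - ts i)) / 2)"
    by (simp add: exp_sum[symmetric] sum_divide_distrib)
  finally show "expectation (\<lambda>\<omega>. exp (\<Sum>i<n. c i * (W (ts (Suc i)) \<omega> - W (ts i) \<omega>)))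
         = exp ((\<Sum>i<n. (c i)\<^sup>2 * (ts (Suc i) - ts i)) / 2)" .
qed

lemma grid_chernoff:
  assumes "0 \<le> ts 0" "\<And>i. i < n \<Longrightarrow> ts i < ts (Suc i)"
    and v: "v = (\<Sum>i<n. (c i)\<^sup>2 * (ts (Suc i) - ts i))" "v > 0" and a: "a \<ge> 0"
  shows "prob {\<omega> \<in> space M. (\<Sum>i<n. c i * (W (ts (Suc i)) \<omega> - W (ts i) \<omega>)) \<le> - a} \<le> exp (- a\<^sup>2 / (2 * v))"
proof -
  let ?S = "\<lambda>\<omega>. (\<Sum>i<n. c i * (W (ts (Suc i)) \<omega> - W (ts i) \<omega>))"
  define l where "l = a / v"
  have l: "l \<ge> 0" using a v by (simp add: l_def)
  have eqc: "(\<lambda>i. (- l * c i)\<^sup>2) = (\<lambda>i. l\<^sup>2 * (c i)\<^sup>2)" by (auto simp: power2_eq_square)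
  have I: "integrable M (\<lambda>\<omega>. exp (\<Sum>i<n. (- l * c i) * (W (ts (Suc i)) \<omega> - W (ts i) \<omega>)))"
    by (rule grid_mgf(1)[OF assms(1,2)])
  have E0: "expectation (\<lambda>\<omega>. exp (\<Sum>i<n. (- l * c i) * (W (ts (Suc i)) \<omega> - W (ts i) \<omega>)))
      = exp ((\<Sum>i<n. (- l * c i)\<^sup>2 * (ts (Suc i) - ts i)) / 2)"
    by (rule grid_mgf(2)[OF assms(1,2)])
  have vv: "(\<Sum>i<n. (- l * c i)\<^sup>2 * (ts (Suc i) - ts i)) = l\<^sup>2 * v"
    unfolding v(1) by (simp add: sum_distrib_left power_mult_distrib mult.assoc)
  have E: "expectation (\<lambda>\<omega>. exp (\<Sum>i<n. (- l * c i) * (W (ts (Suc i)) \<omega> - W (ts i) \<omega>))) = exp (l\<^sup>2 * v / 2)"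
    using E0 vv by simp
  have ee: "(\<Sum>i<n. (- l * c i) * (W (ts (Suc i)) \<omega> - W (ts i) \<omega>)) = - l * ?S \<omega>" for \<omega>
    by (simp add: sum_distrib_left mult.assoc)
  have pt: "exp (l * a) \<le> exp (\<Sum>i<n. (- l * c i) * (W (ts (Suc i)) \<omega> - W (ts i) \<omega>))"
    if "?S \<omega> \<le> - a" for \<omega>
  proof -
    have "l * a \<le> l * (- ?S \<omega>)" using l that by (intro mult_left_mono) auto
    then show ?thesis unfolding ee by simp
  qed
  have sub: "{\<omega> \<in> space M. ?S \<omega> \<le> - a} \<subseteq> {\<omega> \<in> space M. exp (\<Sum>i<n. (- l * c i) * (W (ts (Suc i)) \<omega> - W (ts i) \<omega>)) \<ge> exp (l * a)}"
    using pt by blast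
  have "prob {\<omega> \<in> space M. ?S \<omega> \<le> - a} \<le> prob {\<omega> \<in> space M. exp (\<Sum>i<n. (- l * c i) * (W (ts (Suc i)) \<omega> - W (ts i) \<omega>)) \<ge> exp (l * a)}"
    by (rule finite_measure_mono[OF sub]) measurable
  also have "\<dots> \<le> exp (l\<^sup>2 * v / 2) / exp (l * a)"
    using integral_Markov_inequality_measure[OF I, of "space M" "exp (l * a)"] E by simp
  also have "\<dots> = exp (- a\<^sup>2 / (2 * v))"
    using v(2) by (simp add: l_def exp_diff[symmetric] power2_eq_square field_simps)
  finally show ?thesis .
qed

end

lemma comp_meas_any[measurable]:
  "(\<lambda>x. x i) \<in> borel_measurable (PiM I (\<lambda>_. borel :: real measure))"
proof (cases "i \<in> I")
  case True then show ?thesis by (rule measurable_component_singleton)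
next
  case False
  have "(\<lambda>x. undefined) \<in> borel_measurable (PiM I (\<lambda>_. borel :: real measure))" by simp
  moreover have "x \<in> space (PiM I (\<lambda>_. borel :: real measure)) \<Longrightarrow> undefined = x i" for x
    using False by (auto simp: space_PiM PiE_def extensional_def)
  ultimately show ?thesis by (rule measurable_cong[THEN iffD1, rotated])
qed

lemma grid_strict:
  fixes g :: "nat \<Rightarrow> real"
  assumes "\<And>i. i < n \<Longrightarrow> g i < g (Suc i)"
  shows "i < j \<Longrightarrow> j \<le> n \<Longrightarrow> g i < g j"
proof (induction j)
  case (Suc j)
  then have "g j < g (Suc j)" using assms by simp
  moreover have "i < j \<Longrightarrow> g i < g j" using Suc by simp
  ultimately show ?case using Suc.prems by (cases "i < j") (auto simp: less_Suc_eq)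
qed simp

context bm_ctx begin

lemma levy_discrete:
  fixes g :: "nat \<Rightarrow> real"
  assumes g0: "0 \<le> g 0" and gi: "\<And>i. i < n \<Longrightarrow> g i < g (Suc i)"
    and p: "p \<le> 1" "\<And>k. k < n \<Longrightarrow> p \<le> prob {\<omega> \<in> space M. \<zeta> * (W (g n) \<omega> - W (g k) \<omega>) \<ge> 0}"
  shows "p * prob {\<omega> \<in> space M. \<exists>k\<le>n. \<zeta> * (W (g k) \<omega> - W (g 0) \<omega>) > \<xi>}
         \<le> prob {\<omega> \<in> space M. \<zeta> * (W (g n) \<omega> - W (g 0) \<omega>) > \<xi>}"
proof -
  define S where "S k \<omega> = \<zeta> * (W (g k) \<omega> - W (g 0) \<omega>)" for k \<omega>
  define A where "A k = {\<omega> \<in> space M. S k \<omega> > \<xi> \<and> (\<forall>j<k. S j \<omega> \<le> \<xi>)}" for k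
  define B where "B k = {\<omega> \<in> space M. \<zeta> * (W (g n) \<omega> - W (g k) \<omega>) \<ge> 0}" for k
  have Smeas[measurable]: "S k \<in> borel_measurable M" for k unfolding S_def by measurable
  have Ameas[measurable]: "A k \<in> sets M" for k unfolding A_def by measurable
  have Bmeas[measurable]: "B k \<in> sets M" for k unfolding B_def by measurable
  have D: "{\<omega> \<in> space M. \<exists>k\<le>n. S k \<omega> > \<xi>} = (\<Union>k\<in>{..n}. A k)"
  proof safe
    fix \<omega> k assume "\<omega> \<in> space M" "k \<le> n" "S k \<omega> > \<xi>"
    then obtain k' where "k' \<le> k" "\<forall>i<k'. \<not> S i \<omega> > \<xi>" "S k' \<omega> > \<xi>"
      using ex_least_nat_le[of "\<lambda>k. S k \<omega> > \<xi>" k] by blast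
    then show "\<omega> \<in> (\<Union>k\<in>{..n}. A k)" using \<open>k \<le> n\<close> \<open>\<omega> \<in> space M\<close>
      by (auto simp: A_def not_less intro!: bexI[of _ k'])
  qed (auto simp: A_def)
  have disj: "disjoint_family_on A {..n}"
    unfolding disjoint_family_on_def A_def
    by (auto, metis linorder_neqE_nat not_le)
  have disj2: "disjoint_family_on (\<lambda>k. A k \<inter> B k) {..n}"
    using disj unfolding disjoint_family_on_def by auto
  have key: "p * prob (A k) \<le> prob (A k \<inter> B k)" if k: "k \<le> n" for k
  proof (cases "k = n")
    case True
    then have "A k \<inter> B k = A k" by (auto simp: B_def A_def)
    moreover have "p * prob (A k) \<le> 1 * prob (A k)" using p(1) by (rule mult_right_mono) simp
    ultimately show ?thesis by simp
  next
    case False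
    then have kn: "k < n" using k by simp
    define ts where "ts i = (if i \<le> k then g i else if i = Suc k then g n else g n + real i)" for i
    have ts0: "0 \<le> ts 0" using g0 by (simp add: ts_def)
    have tsi: "ts i < ts (Suc i)" if "i < Suc k" for i
    proof (cases "i < k")
      case True then show ?thesis using gi[of i] kn by (simp add: ts_def)
    next
      case False then have "i = k" using that by simp
      then show ?thesis using grid_strict[of n g k n, OF gi] kn by (simp add: ts_def)
    qed
    define Y where "Y i \<omega> = W (ts (Suc i)) \<omega> - W (ts i) \<omega>" for i \<omega>
    have ind: "indep_vars (\<lambda>_. borel) Y {..<Suc k}"
      unfolding Y_def by (rule inc_indep[OF ts0 tsi])
    have iv: "indep_var (PiM {..<k} (\<lambda>_. borel)) (\<lambda>\<omega>. restrict (\<lambda>i. Y i \<omega>) {..<k})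
                         (PiM {k} (\<lambda>_. borel)) (\<lambda>\<omega>. restrict (\<lambda>i. Y i \<omega>) {k})"
      by (rule indep_var_restrict[OF ind]) auto
    define Sa where "Sa = {y \<in> space (PiM {..<k} (\<lambda>_. borel :: real measure)).
        \<zeta> * (\<Sum>i<k. y i) > \<xi> \<and> (\<forall>j<k. \<zeta> * (\<Sum>i<j. y i) \<le> \<xi>)}"
    define Sb where "Sb = {y \<in> space (PiM {k} (\<lambda>_. borel :: real measure)). \<zeta> * y k \<ge> 0}"
    have Sa_m: "Sa \<in> sets (PiM {..<k} (\<lambda>_. borel))" unfolding Sa_def by measurable
    have Sb_m: "Sb \<in> sets (PiM {k} (\<lambda>_. borel))" unfolding Sb_def by measurable
    have tele: "(\<Sum>i<j. Y i \<omega>) = W (g j) \<omega> - W (g 0) \<omega>" if "j \<le> k" for j \<omega>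
    proof -
      have "(\<Sum>i<j. Y i \<omega>) = (\<Sum>i<j. W (g (Suc i)) \<omega> - W (g i) \<omega>)"
        using that by (intro sum.cong) (auto simp: Y_def ts_def)
      also have "\<dots> = W (g j) \<omega> - W (g 0) \<omega>" by (rule sum_lessThan_telescope)
      finally show ?thesis .
    qed
    have sumr: "(\<Sum>i<j. restrict (\<lambda>i. Y i \<omega>) {..<k} i) = (\<Sum>i<j. Y i \<omega>)" if "j \<le> k" for j \<omega>
      using that by (intro sum.cong) auto
    have spa: "restrict (\<lambda>i. Y i \<omega>) I \<in> space (PiM I (\<lambda>_. borel :: real measure))" for I \<omega>
      by (simp add: space_PiM)
    have eqA: "(\<lambda>\<omega>. restrict (\<lambda>i. Y i \<omega>) {..<k}) -` Sa \<inter> space M = A k"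
      unfolding Sa_def A_def S_def using spa
      by (auto simp: sumr tele less_imp_le)
    have eqB: "(\<lambda>\<omega>. restrict (\<lambda>i. Y i \<omega>) {k}) -` Sb \<inter> space M = B k"
      unfolding Sb_def B_def using spa by (auto simp: Y_def ts_def)
    have eqAB: "(\<lambda>\<omega>. (restrict (\<lambda>i. Y i \<omega>) {..<k}, restrict (\<lambda>i. Y i \<omega>) {k})) -` (Sa \<times> Sb) \<inter> space M = A k \<inter> B k"
      using eqA eqB by auto
    have "prob (A k \<inter> B k) = prob (A k) * prob (B k)"
      using indep_varD[OF iv Sa_m Sb_m] unfolding eqAB eqA eqB .
    moreover have "p \<le> prob (B k)" using p(2)[OF kn] by (simp add: B_def)
    ultimately show ?thesis using mult_right_mono[of p "prob (B k)" "prob (A k)"] by (simp add: mult.commute)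
  qed
  have "p * prob {\<omega> \<in> space M. \<exists>k\<le>n. S k \<omega> > \<xi>} = p * (\<Sum>k\<in>{..n}. prob (A k))"
    unfolding D by (subst finite_measure_finite_Union) (auto intro: disj)
  also have "\<dots> = (\<Sum>k\<in>{..n}. p * prob (A k))" by (simp add: sum_distrib_left)
  also have "\<dots> \<le> (\<Sum>k\<in>{..n}. prob (A k \<inter> B k))" by (rule sum_mono) (simp add: key)
  also have "\<dots> = prob (\<Union>k\<in>{..n}. A k \<inter> B k)"
    by (subst finite_measure_finite_Union) (auto intro: disj2)
  also have "\<dots> \<le> prob {\<omega> \<in> space M. S n \<omega> > \<xi>}"
  proof (rule finite_measure_mono)
    show "(\<Union>k\<in>{..n}. A k \<inter> B k) \<subseteq> {\<omega> \<in> space M. S n \<omega> > \<xi>}"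
    proof safe
      fix \<omega> k assume "k \<le> n" "\<omega> \<in> A k" "\<omega> \<in> B k"
      then have "S k \<omega> > \<xi>" "\<zeta> * (W (g n) \<omega> - W (g k) \<omega>) \<ge> 0" by (auto simp: A_def B_def)
      then show "\<xi> < S n \<omega>" by (simp add: S_def algebra_simps)
    qed (auto simp: A_def)
  qed measurable
  finally show ?thesis by (simp add: S_def)
qed

end

definition pc :: real where "pc = exp (-1/2) / sqrt (2 * pi)"

lemma pc_pos: "pc > 0" by (simp add: pc_def)
lemma pc_le1: "pc \<le> 1"
proof -
  have "exp (-1/2::real) \<le> 1" by simp
  moreover have s: "1 \<le> sqrt (2 * pi)" using pi_gt3 by simp
  ultimately have "exp (-1/2::real) \<le> sqrt (2 * pi)" by linarith
  then show ?thesis unfolding pc_def using s by (simp add: divide_le_eq_1)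
qed

lemma nd_self: "s > 0 \<Longrightarrow> s * normal_density 0 s s = pc"
  unfolding normal_density_def pc_def
  by (simp add: real_sqrt_mult power2_eq_square field_simps)

context bm_ctx begin

definition osc :: "real \<Rightarrow> real \<Rightarrow> real \<Rightarrow> 'a set" where
  "osc a \<delta> \<xi> = {\<omega> \<in> space M. \<exists>m::nat. \<exists>k\<le>(2::nat)^m. \<bar>W (a + real k * \<delta> / 2^m) \<omega> - W a \<omega>\<bar> > \<xi>}"

lemma osc_meas[measurable]: "osc a \<delta> \<xi> \<in> sets M"
  unfolding osc_def by measurable

lemma p_const:
  assumes "0 \<le> u" "u < v" "\<zeta> = 1 \<or> \<zeta> = -1"
  shows "pc \<le> prob {\<omega> \<in> space M. \<zeta> * (W v \<omega> - W u \<omega>) \<ge> 0}"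
proof -
  let ?s = "sqrt (v - u)"
  have s: "?s > 0" using assms by simp
  show ?thesis
  proof (cases "\<zeta> = 1")
    case True
    have "pc = (?s - 0) * normal_density 0 ?s ?s" using nd_self[OF s] by simp
    also have "\<dots> \<le> prob {\<omega> \<in> space M. 0 \<le> W v \<omega> - W u \<omega> \<and> W v \<omega> - W u \<omega> \<le> ?s}"
      by (rule inc_interval_lower) (use assms s in auto)
    also have "\<dots> \<le> prob {\<omega> \<in> space M. \<zeta> * (W v \<omega> - W u \<omega>) \<ge> 0}"
      by (rule finite_measure_mono) (auto simp: True)
    finally show ?thesis .
  next
    case False
    then have z: "\<zeta> = -1" using assms by simp
    have "pc = (0 - (- ?s)) * normal_density 0 ?s ?s" using nd_self[OF s] by simp
    also have "\<dots> \<le> prob {\<omega> \<in> space M. - ?s \<le> W v \<omega> - W u \<omega> \<and> W v \<omega> - W u \<omega> \<le> 0}"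
      by (rule inc_interval_lower) (use assms s in auto)
    also have "\<dots> \<le> prob {\<omega> \<in> space M. \<zeta> * (W v \<omega> - W u \<omega>) \<ge> 0}"
      by (rule finite_measure_mono) (auto simp: z)
    finally show ?thesis .
  qed
qed

lemma tail_single:
  assumes "0 \<le> a" "0 < \<delta>" "\<xi> \<ge> 0" "\<zeta> = 1 \<or> \<zeta> = -1"
  shows "prob {\<omega> \<in> space M. \<zeta> * (W (a + \<delta>) \<omega> - W a \<omega>) > \<xi>} \<le> exp (- \<xi>\<^sup>2 / (2 * \<delta>))"
proof -
  define ts where "ts i = a + real i * \<delta>" for i :: nat
  have c: "(\<Sum>i<1. (- \<zeta>)\<^sup>2 * (ts (Suc i) - ts i)) = \<delta>" using assms by (auto simp: ts_def)
  have "prob {\<omega> \<in> space M. \<zeta> * (W (a + \<delta>) \<omega> - W a \<omega>) > \<xi>}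
      \<le> prob {\<omega> \<in> space M. (\<Sum>i<1. (- \<zeta>) * (W (ts (Suc i)) \<omega> - W (ts i) \<omega>)) \<le> - \<xi>}"
    by (rule finite_measure_mono) (auto simp: ts_def)
  also have "\<dots> \<le> exp (- \<xi>\<^sup>2 / (2 * \<delta>))"
    by (rule grid_chernoff[where v=\<delta>]) (use assms c in \<open>auto simp: ts_def\<close>)
  finally show ?thesis .
qed

lemma osc_level_prob:
  assumes "0 \<le> a" "0 < \<delta>" "\<xi> \<ge> 0" "\<zeta> = 1 \<or> \<zeta> = -1"
  shows "prob {\<omega> \<in> space M. \<exists>k\<le>(2::nat)^m. \<zeta> * (W (a + real k * \<delta> / 2^m) \<omega> - W a \<omega>) > \<xi>}
    \<le> exp (- \<xi>\<^sup>2 / (2 * \<delta>)) / pc"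
proof -
  define g where "g k = a + real k * \<delta> / 2^m" for k :: nat
  have g0: "0 \<le> g 0" "g 0 = a" using assms by (auto simp: g_def)
  have gn: "g (2^m) = a + \<delta>" by (simp add: g_def)
  have gi: "g i < g (Suc i)" for i using assms by (simp add: g_def field_simps)
  have "pc * prob {\<omega> \<in> space M. \<exists>k\<le>2^m. \<zeta> * (W (g k) \<omega> - W (g 0) \<omega>) > \<xi>}
      \<le> prob {\<omega> \<in> space M. \<zeta> * (W (g (2^m)) \<omega> - W (g 0) \<omega>) > \<xi>}"
  proof (rule levy_discrete[OF g0(1) gi pc_le1])
    fix k :: nat assume "k < 2^m"
    then have "g k < g (2^m)" using grid_strict[of "2^m" g k "2^m", OF gi] by simp
    moreover have "0 \<le> g k" using assms by (simp add: g_def)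
    ultimately show "pc \<le> prob {\<omega> \<in> space M. 0 \<le> \<zeta> * (W (g (2 ^ m)) \<omega> - W (g k) \<omega>)}"
      using p_const assms(4) by blast
  qed
  also have "\<dots> \<le> exp (- \<xi>\<^sup>2 / (2 * \<delta>))" unfolding gn g0(2) by (rule tail_single[OF assms])
  finally show ?thesis using pc_pos by (simp add: g_def g0 field_simps)
qed

lemma osc_prob:
  assumes "0 \<le> a" "0 < \<delta>" "\<xi> \<ge> 0"
  shows "prob (osc a \<delta> \<xi>) \<le> 2 * exp (- \<xi>\<^sup>2 / (2 * \<delta>)) / pc"
proof -
  define D where "D m = {\<omega> \<in> space M. \<exists>k\<le>(2::nat)^m. \<bar>W (a + real k * \<delta> / 2^m) \<omega> - W a \<omega>\<bar> > \<xi>}" for m :: nat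
  have Dm[measurable]: "D m \<in> sets M" for m unfolding D_def by measurable
  have U: "osc a \<delta> \<xi> = (\<Union>m. D m)" unfolding osc_def D_def by auto
  have inc: "incseq D"
  proof (rule incseq_SucI, safe)
    fix m \<omega> assume "\<omega> \<in> D m"
    then obtain k where k: "k \<le> 2^m" "\<bar>W (a + real k * \<delta> / 2^m) \<omega> - W a \<omega>\<bar> > \<xi>" "\<omega> \<in> space M"
      by (auto simp: D_def)
    have "a + real (2 * k) * \<delta> / 2^Suc m = a + real k * \<delta> / 2^m" by simp
    then show "\<omega> \<in> D (Suc m)" using k unfolding D_def
      by (intro CollectI conjI exI[of _ "2 * k"]) auto
  qed
  have bound: "prob (D m) \<le> 2 * exp (- \<xi>\<^sup>2 / (2 * \<delta>)) / pc" for m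
  proof -
    have "D m \<subseteq> {\<omega> \<in> space M. \<exists>k\<le>(2::nat)^m. 1 * (W (a + real k * \<delta> / 2^m) \<omega> - W a \<omega>) > \<xi>}
            \<union> {\<omega> \<in> space M. \<exists>k\<le>(2::nat)^m. (-1) * (W (a + real k * \<delta> / 2^m) \<omega> - W a \<omega>) > \<xi>}"
      unfolding D_def by (auto simp: abs_real_def split: if_splits)
    then have "prob (D m) \<le> prob ({\<omega> \<in> space M. \<exists>k\<le>(2::nat)^m. 1 * (W (a + real k * \<delta> / 2^m) \<omega> - W a \<omega>) > \<xi>}
            \<union> {\<omega> \<in> space M. \<exists>k\<le>(2::nat)^m. (-1) * (W (a + real k * \<delta> / 2^m) \<omega> - W a \<omega>) > \<xi>})"
      by (rule finite_measure_mono) measurable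
    also have "\<dots> \<le> prob {\<omega> \<in> space M. \<exists>k\<le>(2::nat)^m. 1 * (W (a + real k * \<delta> / 2^m) \<omega> - W a \<omega>) > \<xi>}
            + prob {\<omega> \<in> space M. \<exists>k\<le>(2::nat)^m. (-1) * (W (a + real k * \<delta> / 2^m) \<omega> - W a \<omega>) > \<xi>}"
      by (rule measure_Un_le) measurable
    also have "\<dots> \<le> exp (- \<xi>\<^sup>2 / (2 * \<delta>)) / pc + exp (- \<xi>\<^sup>2 / (2 * \<delta>)) / pc"
      by (intro add_mono osc_level_prob) (use assms in auto)
    finally show ?thesis by simp
  qed
  have "(\<lambda>m. prob (D m)) \<longlonglongrightarrow> prob (\<Union>m. D m)"
    by (rule finite_Lim_measure_incseq) (use inc in auto)
  then have "prob (\<Union>m. D m) \<le> 2 * exp (- \<xi>\<^sup>2 / (2 * \<delta>)) / pc"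
    by (rule LIMSEQ_le_const2) (use bound in auto)
  then show ?thesis unfolding U .
qed

lemma osc_cont:
  assumes \<omega>: "\<omega> \<in> space M" and a: "0 \<le> a" and d: "0 < \<delta>" and no: "\<omega> \<notin> osc a \<delta> \<xi>"
    and r: "a \<le> r" "r \<le> a + \<delta>"
  shows "\<bar>W r \<omega> - W a \<omega>\<bar> \<le> \<xi>"
proof (rule ccontr)
  assume "\<not> ?thesis"
  then have gt: "\<bar>W r \<omega> - W a \<omega>\<bar> > \<xi>" by simp
  define e where "e = \<bar>W r \<omega> - W a \<omega>\<bar> - \<xi>"
  have e: "e > 0" using gt by (simp add: e_def)
  have "continuous_on {a..a+\<delta>} (\<lambda>t. W t \<omega>)"
    using W_cont[OF \<omega>] by (rule continuous_on_subset) (use a in auto)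
  then obtain d where d0: "d > 0" and dd: "\<And>t. t \<in> {a..a+\<delta>} \<Longrightarrow> dist t r < d \<Longrightarrow> dist (W t \<omega>) (W r \<omega>) < e"
    using r e unfolding continuous_on_iff by (metis atLeastAtMost_iff)
  obtain m :: nat where m: "\<delta> / d < 2^m" using real_arch_pow[of 2 "\<delta> / d"] by auto
  have pm: "(0::real) < 2^m" by simp
  define q where "q = (r - a) * 2^m / \<delta>"
  have q0: "0 \<le> q" using r d by (simp add: q_def)
  have q1: "q \<le> 2^m" using r d by (simp add: q_def divide_le_eq mult_right_mono)
  define k where "k = nat \<lfloor>q\<rfloor>"
  have kq: "real k \<le> q" "q < real k + 1" using q0 by (simp_all add: k_def)
  have k2: "k \<le> 2^m"
  proof -
    have "real k \<le> 2^m" using kq q1 by linarith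
    then show ?thesis by (metis of_nat_le_iff of_nat_numeral of_nat_power)
  qed
  define t where "t = a + real k * \<delta> / 2^m"
  have "real k * \<delta> / 2^m \<le> q * \<delta> / 2^m" using kq d by (intro divide_right_mono mult_right_mono) auto
  then have t1: "t \<le> r" using d by (simp add: t_def q_def)
  have t0: "a \<le> t" using d by (simp add: t_def)
  have "(q - real k) * \<delta> / 2^m < 1 * \<delta> / 2^m"
    using kq d by (intro divide_strict_right_mono mult_strict_right_mono) auto
  also have "\<dots> < d" using m d d0 by (simp add: field_simps)
  finally have lt: "(q - real k) * \<delta> / 2^m < d" .
  have "r - t = (q - real k) * \<delta> / 2^m" using d by (simp add: t_def q_def field_simps)
  with lt have "r - t < d" by simp
  then have "dist t r < d" using t1 by (simp add: dist_real_def)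
  then have "dist (W t \<omega>) (W r \<omega>) < e" using dd t0 t1 r by auto
  then have "\<bar>W t \<omega> - W a \<omega>\<bar> > \<xi>" unfolding e_def dist_real_def by linarith
  then have "\<omega> \<in> osc a \<delta> \<xi>" unfolding osc_def t_def using \<omega> k2 by blast
  then show False using no by simp
qed

end

definition Zp :: "real \<Rightarrow> (real \<Rightarrow> real) \<Rightarrow> real \<Rightarrow> real" where
  "Zp \<mu> w t = exp (- \<mu> * t) * w t + \<mu> * integral {0..t} (\<lambda>r. exp (- \<mu> * r) * w r)"

lemma exp_integral:
  fixes \<mu> a t :: real
  assumes "\<mu> \<noteq> 0" "a \<le> t"
  shows "integral {a..t} (\<lambda>r. exp (- \<mu> * r)) = (exp (- \<mu> * a) - exp (- \<mu> * t)) / \<mu>"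
proof -
  have "((\<lambda>r. exp (- \<mu> * r)) has_integral ((\<lambda>r. - exp (- \<mu> * r) / \<mu>) t - (\<lambda>r. - exp (- \<mu> * r) / \<mu>) a)) {a..t}"
  proof (rule fundamental_theorem_of_calculus[OF assms(2)])
    fix x assume "x \<in> {a..t}"
    have "((\<lambda>r. - exp (- \<mu> * r) / \<mu>) has_real_derivative exp (- \<mu> * x)) (at x within {a..t})"
      using assms(1) by (auto intro!: derivative_eq_intros simp: field_simps)
    then show "((\<lambda>r. - exp (- \<mu> * r) / \<mu>) has_vector_derivative exp (- \<mu> * x)) (at x within {a..t})"
      by (simp add: has_real_derivative_iff_has_vector_derivative)
  qed
  then have "integral {a..t} (\<lambda>r. exp (- \<mu> * r)) = (\<lambda>r. - exp (- \<mu> * r) / \<mu>) t - (\<lambda>r. - exp (- \<mu> * r) / \<mu>) a"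
    by (rule integral_unique)
  then show ?thesis by (simp add: diff_divide_distrib)
qed

lemma Zp_increment:
  assumes \<mu>: "\<mu> \<noteq> 0" and w: "continuous_on {0..} w" and a: "0 \<le> a" "a \<le> t"
  shows "Zp \<mu> w t - Zp \<mu> w a = exp (- \<mu> * a) * (w t - w a) + \<mu> * integral {a..t} (\<lambda>r. exp (- \<mu> * r) * (w r - w t))"
proof -
  let ?f = "\<lambda>r. exp (- \<mu> * r) * w r"
  have cf: "continuous_on {0..t} ?f"
    by (intro continuous_intros continuous_on_subset[OF w]) auto
  have cf2: "continuous_on {a..t} ?f" by (rule continuous_on_subset[OF cf]) (use a in auto)
  have i1: "integral {0..a} ?f + integral {a..t} ?f = integral {0..t} ?f"
    using Henstock_Kurzweil_Integration.integral_combine[where a=0 and c=a and b=t and f="?f"] a integrable_continuous_real[OF cf] by auto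
  have int1: "?f integrable_on {a..t}" using cf2 by (rule integrable_continuous_real)
  have int2: "(\<lambda>r. exp (- \<mu> * r) * w t) integrable_on {a..t}"
    by (intro integrable_continuous_real continuous_intros)
  have "integral {a..t} (\<lambda>r. exp (- \<mu> * r) * (w r - w t)) = integral {a..t} (\<lambda>r. ?f r - exp (- \<mu> * r) * w t)"
    by (simp add: algebra_simps)
  also have "\<dots> = integral {a..t} ?f - integral {a..t} (\<lambda>r. exp (- \<mu> * r) * w t)"
    by (rule integral_diff[OF int1 int2])
  also have "integral {a..t} (\<lambda>r. exp (- \<mu> * r) * w t) = w t * ((exp (- \<mu> * a) - exp (- \<mu> * t)) / \<mu>)"
    using exp_integral[OF \<mu> a(2)] Henstock_Kurzweil_Integration.integral_mult_right[where c="w t" and S="{a..t}" and f="\<lambda>r. exp (- \<mu> * r)"]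
    by (simp add: mult.commute)
  finally have "integral {a..t} (\<lambda>r. exp (- \<mu> * r) * (w r - w t)) = integral {a..t} ?f - w t * ((exp (- \<mu> * a) - exp (- \<mu> * t)) / \<mu>)" .
  then have R: "\<mu> * integral {a..t} (\<lambda>r. exp (- \<mu> * r) * (w r - w t)) = \<mu> * integral {a..t} ?f - w t * (exp (- \<mu> * a) - exp (- \<mu> * t))"
    using \<mu> by (simp add: right_diff_distrib field_simps)
  have L: "Zp \<mu> w t - Zp \<mu> w a = exp (- \<mu> * t) * w t - exp (- \<mu> * a) * w a + \<mu> * integral {a..t} ?f"
    unfolding Zp_def i1[symmetric] by (simp add: algebra_simps)
  show ?thesis unfolding L R by (simp add: algebra_simps)
qed

lemma Zp_increment_bound:
  assumes \<mu>: "\<mu> > 0" and w: "continuous_on {0..} w" and a: "0 \<le> a" "a \<le> t"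
    and osc: "\<And>r. a \<le> r \<Longrightarrow> r \<le> t \<Longrightarrow> \<bar>w r - w a\<bar> \<le> \<xi>"
  shows "\<bar>Zp \<mu> w t - Zp \<mu> w a - exp (- \<mu> * a) * (w t - w a)\<bar> \<le> 2 * \<mu> * (t - a) * \<xi>"
proof -
  have "norm (integral {a..t} (\<lambda>r. exp (- \<mu> * r) * (w r - w t))) \<le> (2 * \<xi>) * (t - a)"
  proof (rule integral_bound[OF a(2)])
    show "continuous_on {a..t} (\<lambda>r. exp (- \<mu> * r) * (w r - w t))"
      by (intro continuous_intros continuous_on_subset[OF w]) (use a in auto)
    fix r assume r: "r \<in> {a..t}"
    have e: "exp (- \<mu> * r) \<le> 1" "0 \<le> exp (- \<mu> * r)" using \<mu> r a by auto
    have "\<bar>w r - w t\<bar> \<le> 2 * \<xi>" using osc[of r] osc[of t] r a by auto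
    moreover have "\<bar>exp (- \<mu> * r) * (w r - w t)\<bar> \<le> 1 * \<bar>w r - w t\<bar>"
      unfolding abs_mult using e by (intro mult_right_mono) auto
    ultimately show "norm (exp (- \<mu> * r) * (w r - w t)) \<le> 2 * \<xi>" by simp
  qed
  then have bd: "\<bar>integral {a..t} (\<lambda>r. exp (- \<mu> * r) * (w r - w t))\<bar> \<le> 2 * \<xi> * (t - a)" by simp
  have "Zp \<mu> w t - Zp \<mu> w a - exp (- \<mu> * a) * (w t - w a) = \<mu> * integral {a..t} (\<lambda>r. exp (- \<mu> * r) * (w r - w t))"
    using Zp_increment[OF _ w a] \<mu> by simp
  then have "\<bar>Zp \<mu> w t - Zp \<mu> w a - exp (- \<mu> * a) * (w t - w a)\<bar> = \<mu> * \<bar>integral {a..t} (\<lambda>r. exp (- \<mu> * r) * (w r - w t))\<bar>"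
    using \<mu> by (simp add: abs_mult)
  also have "\<dots> \<le> \<mu> * (2 * \<xi> * (t - a))" using bd \<mu> by (intro mult_left_mono) auto
  finally show ?thesis by (simp add: algebra_simps)
qed

lemma sde_Zp:
  fixes x w :: "real \<Rightarrow> real"
  assumes \<mu>: "\<mu> > 0" and w: "continuous_on {0..} w" and xc: "continuous_on {0..} x"
    and eq: "\<And>t. t \<ge> 0 \<Longrightarrow> x t = x0 + integral {0..t} (\<lambda>s. \<mu> * x s) + c * w t"
    and t: "t \<ge> 0"
  shows "exp (- \<mu> * t) * x t - x0 = c * Zp \<mu> w t"
proof -
  define y where "y t = x0 + integral {0..t} (\<lambda>s. \<mu> * x s)" for t
  define \<phi> where "\<phi> t = exp (- \<mu> * t) * y t - x0 - c * \<mu> * integral {0..t} (\<lambda>r. exp (- \<mu> * r) * w r)" for t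
  have "\<exists>k. \<forall>s\<in>{0..t}. \<phi> s = k"
  proof (rule has_field_derivative_zero_constant)
    fix s assume s: "s \<in> {0..t}"
    have c1: "continuous_on {0..t} (\<lambda>s. \<mu> * x s)" by (intro continuous_intros continuous_on_subset[OF xc]) auto
    have c2: "continuous_on {0..t} (\<lambda>r. exp (- \<mu> * r) * w r)" by (intro continuous_intros continuous_on_subset[OF w]) auto
    have d1: "((\<lambda>u. integral {0..u} (\<lambda>s. \<mu> * x s)) has_real_derivative \<mu> * x s) (at s within {0..t})"
      by (rule integral_has_real_derivative[OF c1 s])
    have d2: "((\<lambda>u. integral {0..u} (\<lambda>r. exp (- \<mu> * r) * w r)) has_real_derivative exp (- \<mu> * s) * w s) (at s within {0..t})"
      by (rule integral_has_real_derivative[OF c2 s])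
    have xs: "x s = y s + c * w s" using eq[of s] s by (simp add: y_def)
    have dexp: "((\<lambda>u. exp (- \<mu> * u)) has_real_derivative (- \<mu> * exp (- \<mu> * s))) (at s within {0..t})"
      by (auto intro!: derivative_eq_intros)
    have dy: "(y has_real_derivative (0 + \<mu> * x s)) (at s within {0..t})"
      unfolding y_def[abs_def] by (rule DERIV_add[OF DERIV_const d1])
    have dprod: "((\<lambda>u. exp (- \<mu> * u) * y u) has_real_derivative
        ((- \<mu> * exp (- \<mu> * s)) * y s + (0 + \<mu> * x s) * exp (- \<mu> * s))) (at s within {0..t})"
      by (rule DERIV_mult[OF dexp dy])
    have dI: "((\<lambda>u. c * \<mu> * integral {0..u} (\<lambda>r. exp (- \<mu> * r) * w r)) has_real_derivative
        c * \<mu> * (exp (- \<mu> * s) * w s)) (at s within {0..t})"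
      by (rule DERIV_cmult[OF d2])
    have "(\<phi> has_real_derivative
        ((- \<mu> * exp (- \<mu> * s)) * y s + (0 + \<mu> * x s) * exp (- \<mu> * s) - 0 - c * \<mu> * (exp (- \<mu> * s) * w s))) (at s within {0..t})"
      unfolding \<phi>_def[abs_def] by (intro DERIV_diff dprod dI DERIV_const)
    moreover have "(- \<mu> * exp (- \<mu> * s)) * y s + (0 + \<mu> * x s) * exp (- \<mu> * s) - 0 - c * \<mu> * (exp (- \<mu> * s) * w s) = 0"
      unfolding xs by (simp add: algebra_simps)
    ultimately show "(\<phi> has_real_derivative 0) (at s within {0..t})" by simp
  qed simp
  then obtain k where k: "\<And>s. s \<in> {0..t} \<Longrightarrow> \<phi> s = k" by blast
  have "\<phi> 0 = 0" by (simp add: \<phi>_def y_def)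
  then have "\<phi> t = 0" using k[of 0] k[of t] t by simp
  moreover have "x t = y t + c * w t" using eq[OF t] by (simp add: y_def)
  ultimately show ?thesis unfolding \<phi>_def Zp_def by (simp add: algebra_simps)
qed

lemma ev_small_exp:
  fixes C \<gamma> :: real assumes g: "\<gamma> > 0"
  shows "eventually (\<lambda>\<epsilon>. C * exp (- \<gamma> / \<epsilon>) \<le> 1) (at_right 0)"
  unfolding eventually_at_right_field
proof (intro exI[of _ "\<gamma> / (\<bar>C\<bar> + 1)"] conjI allI impI)
  show "0 < \<gamma> / (\<bar>C\<bar> + 1)" using g by simp
  fix \<epsilon> :: real assume e: "0 < \<epsilon>" "\<epsilon> < \<gamma> / (\<bar>C\<bar> + 1)"
  then have "\<epsilon> * (\<bar>C\<bar> + 1) < \<gamma>" by (simp add: field_simps)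
  then have "\<bar>C\<bar> + 1 < \<gamma> / \<epsilon>" using e by (simp add: field_simps)
  moreover have "1 + \<gamma> / \<epsilon> \<le> exp (\<gamma> / \<epsilon>)" by (rule exp_ge_add_one_self)
  ultimately have "C \<le> exp (\<gamma> / \<epsilon>)" by linarith
  then have "C / exp (\<gamma> / \<epsilon>) \<le> 1" by simp
  then show "C * exp (- \<gamma> / \<epsilon>) \<le> 1" by (simp add: exp_minus field_simps)
qed

lemma ev_conv:
  fixes p :: "real \<Rightarrow> real"
  assumes "\<And>\<gamma>. \<gamma> > 0 \<Longrightarrow> eventually (\<lambda>\<epsilon>. exp (- (R + \<gamma>) / \<epsilon>) \<le> p \<epsilon> \<and> p \<epsilon> \<le> exp (- (R - \<gamma>) / \<epsilon>)) (at_right 0)"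
  shows "((\<lambda>\<epsilon>. \<epsilon> * ln (p \<epsilon>)) \<longlongrightarrow> - R) (at_right 0)"
proof (rule tendstoI)
  fix e :: real assume e: "e > 0"
  have ev: "eventually (\<lambda>\<epsilon>. exp (- (R + e/2) / \<epsilon>) \<le> p \<epsilon> \<and> p \<epsilon> \<le> exp (- (R - e/2) / \<epsilon>)) (at_right 0)"
    using assms[of "e/2"] e by simp
  have pos: "eventually (\<lambda>\<epsilon>. \<epsilon> > (0::real)) (at_right 0)" by (simp add: eventually_at_right_less)
  show "eventually (\<lambda>\<epsilon>. dist (\<epsilon> * ln (p \<epsilon>)) (- R) < e) (at_right 0)"
    using ev pos
  proof eventually_elim
    case (elim \<epsilon>)
    have pp: "p \<epsilon> > 0" using elim(1) by (meson exp_gt_zero less_le_trans)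
    have l1: "- (R + e/2) / \<epsilon> \<le> ln (p \<epsilon>)" using elim pp by (metis exp_le_cancel_iff exp_ln)
    have l2: "ln (p \<epsilon>) \<le> - (R - e/2) / \<epsilon>" using elim pp by (metis exp_le_cancel_iff exp_ln)
    have "\<epsilon> * (- (R + e/2) / \<epsilon>) \<le> \<epsilon> * ln (p \<epsilon>)" using l1 elim(2) by (intro mult_left_mono) auto
    then have a1: "- (R + e/2) \<le> \<epsilon> * ln (p \<epsilon>)" using elim(2) by simp
    have "\<epsilon> * ln (p \<epsilon>) \<le> \<epsilon> * (- (R - e/2) / \<epsilon>)" using l2 elim(2) by (intro mult_left_mono) auto
    then have a2: "\<epsilon> * ln (p \<epsilon>) \<le> - (R - e/2)" using elim(2) by simp
    show ?case using a1 a2 e by (simp add: dist_real_def abs_less_iff)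
  qed
qed

lemma exp_neg_quad: fixes x :: real assumes "x \<ge> 0" shows "exp (- x) \<le> 1 - x + x\<^sup>2 / 2"
proof -
  have "(\<lambda>y. 1 - y + y\<^sup>2 / 2 - exp (- y)) 0 \<le> (\<lambda>y. 1 - y + y\<^sup>2 / 2 - exp (- y)) x"
  proof (rule DERIV_nonneg_imp_nondecreasing[OF assms])
    fix y :: real assume y: "0 \<le> y" "y \<le> x"
    have "((\<lambda>y. 1 - y + y\<^sup>2 / 2 - exp (- y)) has_real_derivative (- 1 + y + exp (- y))) (at y)"
      by (auto intro!: derivative_eq_intros)
    moreover have "- 1 + y + exp (- y) \<ge> 0" using exp_ge_add_one_self[of "- y"] by linarith
    ultimately show "\<exists>d. ((\<lambda>y. 1 - y + y\<^sup>2 / 2 - exp (- y)) has_real_derivative d) (at y) \<and> d \<ge> 0" by blast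
  qed
  then show ?thesis by simp
qed

lemma Zp_zero: "Zp \<mu> w 0 = w 0" by (simp add: Zp_def)

lemma Zp_tele:
  assumes \<mu>: "\<mu> > 0" and w: "continuous_on {0..} w" and w0: "w 0 = 0" and \<Delta>: "\<Delta> > 0"
    and osc: "\<And>k r. k < j \<Longrightarrow> real k * \<Delta> \<le> r \<Longrightarrow> r \<le> real k * \<Delta> + \<Delta> \<Longrightarrow> \<bar>w r - w (real k * \<Delta>)\<bar> \<le> \<xi>"
  shows "\<bar>Zp \<mu> w (real j * \<Delta>) - (\<Sum>k<j. exp (- \<mu> * (real k * \<Delta>)) * (w (real (Suc k) * \<Delta>) - w (real k * \<Delta>)))\<bar>
          \<le> 2 * \<mu> * (real j * \<Delta>) * \<xi>"
  using osc
proof (induction j)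
  case 0 then show ?case by (simp add: Zp_zero w0)
next
  case (Suc j)
  have IH: "\<bar>Zp \<mu> w (real j * \<Delta>) - (\<Sum>k<j. exp (- \<mu> * (real k * \<Delta>)) * (w (real (Suc k) * \<Delta>) - w (real k * \<Delta>)))\<bar>
          \<le> 2 * \<mu> * (real j * \<Delta>) * \<xi>"
    using Suc by simp
  have inc: "\<bar>Zp \<mu> w (real (Suc j) * \<Delta>) - Zp \<mu> w (real j * \<Delta>) - exp (- \<mu> * (real j * \<Delta>)) * (w (real (Suc j) * \<Delta>) - w (real j * \<Delta>))\<bar>
      \<le> 2 * \<mu> * (real (Suc j) * \<Delta> - real j * \<Delta>) * \<xi>"
  proof (rule Zp_increment_bound[OF \<mu> w])
    show "0 \<le> real j * \<Delta>" using \<Delta> by simp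
    show "real j * \<Delta> \<le> real (Suc j) * \<Delta>" using \<Delta> by (simp add: distrib_right)
    fix r assume "real j * \<Delta> \<le> r" "r \<le> real (Suc j) * \<Delta>"
    then show "\<bar>w r - w (real j * \<Delta>)\<bar> \<le> \<xi>" using Suc.prems[of j r] by (simp add: distrib_right)
  qed
  have "real (Suc j) * \<Delta> - real j * \<Delta> = \<Delta>" by (simp add: distrib_right)
  then show ?case using IH inc by (simp add: distrib_right distrib_left abs_le_iff)
qed

lemma riemann_upper:
  fixes \<mu> \<delta> :: real
  assumes "\<mu> > 0" "\<delta> > 0" "\<mu> * \<delta> < 1"
  shows "(\<Sum>k<j. (exp (- \<mu> * (real k * \<delta>)))\<^sup>2 * \<delta>) \<le> ((1 - exp (- 2 * \<mu> * (real j * \<delta>))) / (2 * \<mu>)) / (1 - \<mu> * \<delta>)"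
proof -
  define e where "e k = exp (- 2 * \<mu> * (real k * \<delta>))" for k :: nat
  have x: "2 * \<mu> * \<delta> * (1 - \<mu> * \<delta>) \<le> 1 - exp (- (2 * \<mu> * \<delta>))"
    using exp_neg_quad[of "2 * \<mu> * \<delta>"] assms by (simp add: power2_eq_square algebra_simps)
  have sq: "(exp (- \<mu> * (real k * \<delta>)))\<^sup>2 = e k" for k
    by (simp add: e_def power2_eq_square exp_add[symmetric])
  have trm: "(2 * \<mu> * (1 - \<mu> * \<delta>)) * (e k * \<delta>) \<le> e k - e (Suc k)" for k
  proof -
    have "e (Suc k) = e k * exp (- (2 * \<mu> * \<delta>))"
      by (simp add: e_def exp_add[symmetric] algebra_simps)
    then have "e k - e (Suc k) = e k * (1 - exp (- (2 * \<mu> * \<delta>)))" by (simp add: algebra_simps)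
    moreover have "e k * (2 * \<mu> * \<delta> * (1 - \<mu> * \<delta>)) \<le> e k * (1 - exp (- (2 * \<mu> * \<delta>)))"
      using x by (intro mult_left_mono) (auto simp: e_def)
    ultimately show ?thesis by (simp add: algebra_simps)
  qed
  have "(2 * \<mu> * (1 - \<mu> * \<delta>)) * (\<Sum>k<j. e k * \<delta>) \<le> (\<Sum>k<j. e k - e (Suc k))"
    unfolding sum_distrib_left by (rule sum_mono) (rule trm)
  also have "\<dots> = e 0 - e j" by (rule sum_lessThan_telescope')
  also have "\<dots> = 1 - exp (- 2 * \<mu> * (real j * \<delta>))" by (simp add: e_def)
  finally have "(2 * \<mu> * (1 - \<mu> * \<delta>)) * (\<Sum>k<j. e k * \<delta>) \<le> 1 - exp (- 2 * \<mu> * (real j * \<delta>))" .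
  moreover have "0 < 2 * \<mu> * (1 - \<mu> * \<delta>)" using assms by simp
  ultimately have "(\<Sum>k<j. e k * \<delta>) \<le> (1 - exp (- 2 * \<mu> * (real j * \<delta>))) / (2 * \<mu> * (1 - \<mu> * \<delta>))"
    by (simp add: field_simps mult.commute)
  moreover have "(\<Sum>k<j. (exp (- \<mu> * (real k * \<delta>)))\<^sup>2 * \<delta>) = (\<Sum>k<j. e k * \<delta>)" unfolding sq ..
  ultimately show ?thesis by (simp add: field_simps)
qed

lemma riemann_lower:
  fixes \<mu> \<delta> :: real
  assumes "\<mu> > 0" "\<delta> > 0"
  shows "(1 - exp (- 2 * \<mu> * (real j * \<delta>))) / (2 * \<mu>) \<le> (\<Sum>k<j. (exp (- \<mu> * (real k * \<delta>)))\<^sup>2 * \<delta>)"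
proof -
  define e where "e k = exp (- 2 * \<mu> * (real k * \<delta>))" for k :: nat
  have x: "1 - exp (- (2 * \<mu> * \<delta>)) \<le> 2 * \<mu> * \<delta>"
    using exp_ge_add_one_self[of "- (2 * \<mu> * \<delta>)"] by linarith
  have sq: "(exp (- \<mu> * (real k * \<delta>)))\<^sup>2 = e k" for k
    by (simp add: e_def power2_eq_square exp_add[symmetric])
  have trm: "e k - e (Suc k) \<le> (2 * \<mu>) * (e k * \<delta>)" for k
  proof -
    have "e (Suc k) = e k * exp (- (2 * \<mu> * \<delta>))"
      by (simp add: e_def exp_add[symmetric] algebra_simps)
    then have "e k - e (Suc k) = e k * (1 - exp (- (2 * \<mu> * \<delta>)))" by (simp add: algebra_simps)
    moreover have "e k * (1 - exp (- (2 * \<mu> * \<delta>))) \<le> e k * (2 * \<mu> * \<delta>)"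
      using x by (intro mult_left_mono) (auto simp: e_def)
    ultimately show ?thesis by (simp add: algebra_simps)
  qed
  have "1 - exp (- 2 * \<mu> * (real j * \<delta>)) = e 0 - e j" by (simp add: e_def)
  also have "\<dots> = (\<Sum>k<j. e k - e (Suc k))" by (rule sum_lessThan_telescope'[symmetric])
  also have "\<dots> \<le> (2 * \<mu>) * (\<Sum>k<j. e k * \<delta>)"
    unfolding sum_distrib_left by (rule sum_mono) (rule trm)
  finally have "1 - exp (- 2 * \<mu> * (real j * \<delta>)) \<le> (2 * \<mu>) * (\<Sum>k<j. e k * \<delta>)" .
  moreover have "(\<Sum>k<j. (exp (- \<mu> * (real k * \<delta>)))\<^sup>2 * \<delta>) = (\<Sum>k<j. e k * \<delta>)" unfolding sq ..
  ultimately show ?thesis using assms by (simp add: field_simps mult.commute)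
qed

locale core = bm_ctx M W for M :: "'a measure" and W +
  fixes \<mu> \<sigma> x0 T :: real and b :: "real \<Rightarrow> real" and X :: "real \<Rightarrow> real \<Rightarrow> 'a \<Rightarrow> real"
  assumes mu: "\<mu> > 0" and sig: "\<sigma> > 0" and Tpos: "T > 0"
    and bcont: "continuous_on {0..T} b"
    and hpos: "\<And>t. t \<in> {0..T} \<Longrightarrow> x0 - exp (- \<mu> * t) * b t > 0"
    and sol: "\<And>\<epsilon>. \<epsilon> > 0 \<Longrightarrow> solves_linear_sde M W \<mu> \<sigma> \<epsilon> x0 (X \<epsilon>)"
begin

definition h where "h t = x0 - exp (- \<mu> * t) * b t"
definition tau where "tau t = (1 - exp (- 2 * \<mu> * t)) / (2 * \<mu>)"
definition F where "F t = (h t)\<^sup>2 / (2 * \<sigma>\<^sup>2 * tau t)"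
definition E where "E \<epsilon> = {\<omega> \<in> space M. \<exists>t\<in>{0..T}. X \<epsilon> t \<omega> \<le> b t}"

lemma h_cont: "continuous_on {0..T} h"
  unfolding h_def[abs_def] by (intro continuous_intros bcont)

lemma h_pos: "t \<in> {0..T} \<Longrightarrow> h t > 0" using hpos by (simp add: h_def)

lemma tau_pos: "t > 0 \<Longrightarrow> tau t > 0" using mu by (simp add: tau_def)

lemma X_meas[measurable]: "\<epsilon> > 0 \<Longrightarrow> X \<epsilon> t \<in> borel_measurable M"
  using sol[of \<epsilon>] by (simp add: solves_linear_sde_def)

lemma X_cont: "\<epsilon> > 0 \<Longrightarrow> \<omega> \<in> space M \<Longrightarrow> continuous_on {0..} (\<lambda>t. X \<epsilon> t \<omega>)"
  using sol[of \<epsilon>] by (simp add: solves_linear_sde_def)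

lemma X_Z:
  assumes "\<epsilon> > 0" "\<omega> \<in> space M" "t \<ge> 0"
  shows "exp (- \<mu> * t) * X \<epsilon> t \<omega> - x0 = (sqrt \<epsilon> * \<sigma>) * Zp \<mu> (\<lambda>s. W s \<omega>) t"
proof (rule sde_Zp[OF mu W_cont[OF assms(2)] X_cont[OF assms(1,2)] _ assms(3)])
  fix t :: real assume "t \<ge> 0"
  then show "X \<epsilon> t \<omega> = x0 + integral {0..t} (\<lambda>s. \<mu> * X \<epsilon> s \<omega>) + sqrt \<epsilon> * \<sigma> * W t \<omega>"
    using sol[OF assms(1)] assms(2) by (simp add: solves_linear_sde_def)
qed

lemma X_le_iff:
  assumes "\<epsilon> > 0" "\<omega> \<in> space M" "t \<ge> 0"
  shows "X \<epsilon> t \<omega> \<le> b t \<longleftrightarrow> Zp \<mu> (\<lambda>s. W s \<omega>) t \<le> - h t / (sqrt \<epsilon> * \<sigma>)"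
proof -
  let ?s = "sqrt \<epsilon> * \<sigma>" and ?Z = "Zp \<mu> (\<lambda>s. W s \<omega>) t" and ?e = "exp (- \<mu> * t)"
  have s: "?s > 0" using assms sig by simp
  have "X \<epsilon> t \<omega> \<le> b t \<longleftrightarrow> ?e * X \<epsilon> t \<omega> \<le> ?e * b t" by simp
  also have "\<dots> \<longleftrightarrow> x0 + ?s * ?Z \<le> ?e * b t" using X_Z[OF assms] by (simp add: algebra_simps)
  also have "\<dots> \<longleftrightarrow> ?s * ?Z \<le> - h t" by (simp add: h_def algebra_simps)
  also have "\<dots> \<longleftrightarrow> ?Z \<le> - h t / ?s" using s by (simp add: field_simps)
  finally show ?thesis .
qed

lemma E_meas: assumes e: "\<epsilon> > 0" shows "E \<epsilon> \<in> sets M"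
proof -
  define G where "G = {\<omega> \<in> space M. \<forall>n::nat. \<exists>r::rat. (0::real) \<le> of_rat r \<and> of_rat r \<le> T \<and>
      X \<epsilon> (of_rat r) \<omega> - b (of_rat r) < 1 / (real n + 1)}"
  have G: "G \<in> sets M" unfolding G_def using e by measurable
  have "E \<epsilon> = G"
  proof (intro set_eqI iffI)
    fix \<omega> assume "\<omega> \<in> E \<epsilon>"
    then obtain t where \<omega>: "\<omega> \<in> space M" and t: "t \<in> {0..T}" "X \<epsilon> t \<omega> \<le> b t" by (auto simp: E_def)
    have gc: "continuous_on {0..T} (\<lambda>t. X \<epsilon> t \<omega> - b t)"
      by (intro continuous_intros bcont continuous_on_subset[OF X_cont[OF e \<omega>]]) auto
    show "\<omega> \<in> G" unfolding G_def
    proof (intro CollectI conjI allI \<omega>)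
      fix n :: nat
      have en: "1 / (real n + 1) > 0" by simp
      obtain d where d: "d > 0" and dd: "\<And>y. y \<in> {0..T} \<Longrightarrow> dist y t < d \<Longrightarrow> dist (X \<epsilon> y \<omega> - b y) (X \<epsilon> t \<omega> - b t) < 1 / (real n + 1)"
        using gc t en unfolding continuous_on_iff by metis
      obtain q :: rat where q: "of_rat q \<in> {0..T}" "\<bar>of_rat q - t\<bar> < d"
      proof (cases "t < T")
        case True
        obtain q :: rat where q: "t < of_rat q" "of_rat q < min (t + d) T" using of_rat_dense[of t "min (t + d) T"] True d by auto
        have t0: "0 \<le> t" using t by simp
        have "(0::real) \<le> of_rat q" using q t0 by linarith
        moreover have "of_rat q \<le> T" "\<bar>of_rat q - t\<bar> < d" using q by auto
        ultimately show ?thesis using that[of q] by simp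
      next
        case False
        then have tT: "t = T" using t by simp
        obtain q :: rat where q: "max (T - d) 0 < of_rat q" "of_rat q < T" using of_rat_dense[of "max (T - d) 0" T] Tpos d by auto
        have "(0::real) \<le> of_rat q" "of_rat q \<le> T" "\<bar>of_rat q - t\<bar> < d" using q tT by auto
        then show ?thesis using that[of q] by simp
      qed
      have "dist (X \<epsilon> (of_rat q) \<omega> - b (of_rat q)) (X \<epsilon> t \<omega> - b t) < 1 / (real n + 1)"
        using dd[OF q(1)] q(2) by (simp add: dist_real_def)
      then have "X \<epsilon> (of_rat q) \<omega> - b (of_rat q) < 1 / (real n + 1)" using t(2) by (simp add: dist_real_def abs_less_iff)
      then show "\<exists>r::rat. (0::real) \<le> of_rat r \<and> of_rat r \<le> (T::real) \<and> X \<epsilon> (of_rat r) \<omega> - b (of_rat r) < 1 / (real n + 1)"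
        using q(1) by (intro exI[of _ q]) simp
    qed
  next
    fix \<omega> assume "\<omega> \<in> G"
    then have \<omega>: "\<omega> \<in> space M" and H: "\<And>n::nat. \<exists>r::rat. (0::real) \<le> of_rat r \<and> of_rat r \<le> T \<and> X \<epsilon> (of_rat r) \<omega> - b (of_rat r) < 1 / (real n + 1)"
      by (auto simp: G_def)
    have gc: "continuous_on {0..T} (\<lambda>t. X \<epsilon> t \<omega> - b t)"
      by (intro continuous_intros bcont continuous_on_subset[OF X_cont[OF e \<omega>]]) auto
    obtain t where t: "t \<in> {0..T}" and tmin: "\<And>y. y \<in> {0..T} \<Longrightarrow> X \<epsilon> t \<omega> - b t \<le> X \<epsilon> y \<omega> - b y"
      using continuous_attains_inf[OF compact_Icc _ gc] Tpos by auto
    have "X \<epsilon> t \<omega> - b t \<le> 0"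
    proof (rule ccontr)
      assume "\<not> ?thesis"
      then have m: "X \<epsilon> t \<omega> - b t > 0" by simp
      obtain n :: nat where n: "1 / (X \<epsilon> t \<omega> - b t) < real n" using reals_Archimedean2 by blast
      then have "1 / (real n + 1) < X \<epsilon> t \<omega> - b t" using m by (simp add: field_simps)
      moreover obtain r :: rat where "(0::real) \<le> of_rat r" "of_rat r \<le> T" "X \<epsilon> (of_rat r) \<omega> - b (of_rat r) < 1 / (real n + 1)"
        using H by blast
      moreover have "X \<epsilon> t \<omega> - b t \<le> X \<epsilon> (of_rat r) \<omega> - b (of_rat r)" using tmin calculation(2,3) by auto
      ultimately show False by linarith
    qed
    then show "\<omega> \<in> E \<epsilon>" using t \<omega> by (auto simp: E_def)
  qed
  then show ?thesis using G by simp
qed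

end

lemma mult_div_cancel_aux: "(k::real) \<noteq> 0 \<Longrightarrow> k * (a / (k * s)) = a / s"
  by (cases "s = 0") (simp_all add: field_simps)

context core begin

lemma ub_incl:
  assumes e: "\<epsilon> > 0" and N: "N > 0" and dN: "\<delta> * real N = T" and d: "\<delta> > 0"
    and th: "0 < \<theta>" "2 * \<theta> < hmin" and hm: "\<And>t. t \<in> {0..T} \<Longrightarrow> hmin \<le> h t"
    and uc: "\<And>t t'. t \<in> {0..T} \<Longrightarrow> t' \<in> {0..T} \<Longrightarrow> \<bar>t - t'\<bar> \<le> \<delta> \<Longrightarrow> \<bar>h t - h t'\<bar> < \<theta>"
  shows "E \<epsilon> \<subseteq> (\<Union>k<N. osc (real k * \<delta>) \<delta> (\<theta> / ((1 + 4 * \<mu> * T) * (sqrt \<epsilon> * \<sigma>))))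
     \<union> (\<Union>j\<in>{1..<N}. {\<omega> \<in> space M. (\<Sum>k<j. exp (- \<mu> * (real k * \<delta>)) * (W (real (Suc k) * \<delta>) \<omega> - W (real k * \<delta>) \<omega>))
            \<le> - ((h (real j * \<delta>) - 2 * \<theta>) / (sqrt \<epsilon> * \<sigma>))})"
proof
  fix \<omega> assume \<omega>E: "\<omega> \<in> E \<epsilon>"
  define s where "s = sqrt \<epsilon> * \<sigma>"
  define K where "K = 1 + 4 * \<mu> * T"
  define \<xi> where "\<xi> = \<theta> / (K * s)"
  let ?s = s
  let ?K = K
  let ?\<xi> = \<xi>
  let ?w = "\<lambda>s. W s \<omega>"
  let ?Z = "Zp \<mu> ?w"
  let ?S = "\<lambda>j \<omega>. (\<Sum>k<j. exp (- \<mu> * (real k * \<delta>)) * (W (real (Suc k) * \<delta>) \<omega> - W (real k * \<delta>) \<omega>))"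
  have s: "?s > 0" using e sig by (simp add: s_def)
  have K: "?K \<ge> 1" using mu Tpos by (simp add: K_def)
  have Kp: "?K > 0" using K by linarith
  have xi: "?\<xi> > 0" using th s Kp unfolding \<xi>_def by (metis divide_pos_pos mult_pos_pos)
  have Kxi: "?K * ?\<xi> = \<theta> / ?s" using Kp unfolding \<xi>_def by (intro mult_div_cancel_aux) simp
  have geq: "\<theta> / ((1 + 4 * \<mu> * T) * s) = \<xi>" "sqrt \<epsilon> * \<sigma> = s" by (simp_all add: \<xi>_def K_def s_def)
  from \<omega>E obtain t where \<omega>: "\<omega> \<in> space M" and t: "t \<in> {0..T}" and Xt: "X \<epsilon> t \<omega> \<le> b t"
    by (auto simp: E_def)
  have Zt: "?Z t \<le> - h t / ?s" using X_le_iff[OF e \<omega>] t Xt by (simp add: s_def)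
  show "\<omega> \<in> (\<Union>k<N. osc (real k * \<delta>) \<delta> (\<theta> / ((1 + 4 * \<mu> * T) * (sqrt \<epsilon> * \<sigma>))))
     \<union> (\<Union>j\<in>{1..<N}. {\<omega> \<in> space M. ?S j \<omega> \<le> - ((h (real j * \<delta>) - 2 * \<theta>) / (sqrt \<epsilon> * \<sigma>))})"
    unfolding geq
  proof -
  show "\<omega> \<in> (\<Union>k<N. osc (real k * \<delta>) \<delta> ?\<xi>) \<union> (\<Union>j\<in>{1..<N}. {\<omega> \<in> space M. ?S j \<omega> \<le> - ((h (real j * \<delta>) - 2 * \<theta>) / ?s)})"
  proof (cases "\<exists>k<N. \<omega> \<in> osc (real k * \<delta>) \<delta> ?\<xi>")
    case True then show ?thesis by blast
  next
    case False
    then have oscb: "\<bar>W r \<omega> - W (real k * \<delta>) \<omega>\<bar> \<le> ?\<xi>" if "k < N" "real k * \<delta> \<le> r" "r \<le> real k * \<delta> + \<delta>" for k r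
      using osc_cont[OF \<omega> _ d, of "real k * \<delta>" ?\<xi> r] that d by auto
    obtain j where j: "j < N" "real j * \<delta> \<le> t" "t \<le> real j * \<delta> + \<delta>"
    proof (cases "t < T")
      case True
      define q where "q = t / \<delta>"
      have q0: "0 \<le> q" using t d by (simp add: q_def)
      have qN: "q < real N" using True d dN by (simp add: q_def field_simps)
      have kq: "real (nat \<lfloor>q\<rfloor>) \<le> q" "q < real (nat \<lfloor>q\<rfloor>) + 1" using q0 by simp_all
      have "nat \<lfloor>q\<rfloor> < N" using kq qN by linarith
      moreover have "real (nat \<lfloor>q\<rfloor>) * \<delta> \<le> t" using kq(1) d by (simp add: q_def field_simps)
      moreover have "t \<le> real (nat \<lfloor>q\<rfloor>) * \<delta> + \<delta>" using kq(2) d by (simp add: q_def field_simps)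
      ultimately show ?thesis by (rule that)
    next
      case False
      then have tT: "t = T" using t by simp
      have "real (N - 1) * \<delta> + \<delta> = T" using N dN by (simp add: of_nat_diff algebra_simps)
      then show ?thesis using N d tT by (intro that[of "N - 1"]) auto
    qed
    have vj0: "0 \<le> real j * \<delta>" using d by simp
    have vjT: "real j * \<delta> \<in> {0..T}" using j t by auto
    have tele: "\<bar>?Z (real j * \<delta>) - ?S j \<omega>\<bar> \<le> 2 * \<mu> * (real j * \<delta>) * ?\<xi>"
    proof (rule Zp_tele[OF mu W_cont[OF \<omega>] W0[OF \<omega>] d])
      fix k r assume "k < j" "real k * \<delta> \<le> r" "r \<le> real k * \<delta> + \<delta>"
      then show "\<bar>W r \<omega> - W (real k * \<delta>) \<omega>\<bar> \<le> ?\<xi>" using oscb[of k r] j by simp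
    qed
    have inc: "\<bar>?Z t - ?Z (real j * \<delta>) - exp (- \<mu> * (real j * \<delta>)) * (W t \<omega> - W (real j * \<delta>) \<omega>)\<bar>
        \<le> 2 * \<mu> * (t - real j * \<delta>) * ?\<xi>"
    proof (rule Zp_increment_bound[OF mu W_cont[OF \<omega>] vj0 j(2)])
      fix r assume "real j * \<delta> \<le> r" "r \<le> t"
      then show "\<bar>W r \<omega> - W (real j * \<delta>) \<omega>\<bar> \<le> ?\<xi>" using oscb[of j r] j by simp
    qed
    have wt: "\<bar>exp (- \<mu> * (real j * \<delta>)) * (W t \<omega> - W (real j * \<delta>) \<omega>)\<bar> \<le> ?\<xi>"
    proof -
      have "exp (- \<mu> * (real j * \<delta>)) \<le> 1" using mu vj0 by simp
      moreover have "\<bar>W t \<omega> - W (real j * \<delta>) \<omega>\<bar> \<le> ?\<xi>" using oscb[of j t] j by simp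
      ultimately show ?thesis unfolding abs_mult
        by (metis abs_exp_cancel abs_ge_zero mult_le_one mult_left_le_one_le order_trans xi less_imp_le mult.commute)
    qed
    have "2 * \<mu> * (real j * \<delta>) * ?\<xi> + 2 * \<mu> * (t - real j * \<delta>) * ?\<xi> = 2 * \<mu> * t * ?\<xi>"
      by (simp add: algebra_simps)
    moreover have "2 * \<mu> * t * ?\<xi> \<le> 2 * \<mu> * T * ?\<xi>" using t mu xi by (intro mult_right_mono mult_left_mono) auto
    moreover have "?K * ?\<xi> = ?\<xi> + 4 * \<mu> * T * ?\<xi>" by (simp add: K_def algebra_simps)
    moreover have "0 \<le> \<mu> * T * ?\<xi>" using mu Tpos xi by simp
    moreover have "?S j \<omega> \<le> ?Z (real j * \<delta>) + 2 * \<mu> * (real j * \<delta>) * ?\<xi>"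
      using tele by (simp only: abs_le_iff) linarith
    moreover have "?Z (real j * \<delta>) \<le> ?Z t - exp (- \<mu> * (real j * \<delta>)) * (W t \<omega> - W (real j * \<delta>) \<omega>) + 2 * \<mu> * (t - real j * \<delta>) * ?\<xi>"
      using inc by (simp only: abs_le_iff) linarith
    moreover have "- exp (- \<mu> * (real j * \<delta>)) * (W t \<omega> - W (real j * \<delta>) \<omega>) \<le> ?\<xi>"
      using wt by (simp only: abs_le_iff) linarith
    ultimately have Sj: "?S j \<omega> \<le> ?Z t + ?K * ?\<xi>" by linarith
    have "\<bar>h t - h (real j * \<delta>)\<bar> < \<theta>" using uc[OF t vjT] j by simp
    then have "- h t / ?s \<le> (- h (real j * \<delta>) + \<theta>) / ?s" using s by (intro divide_right_mono) auto
    then have Sj2: "?S j \<omega> \<le> - ((h (real j * \<delta>) - 2 * \<theta>) / ?s)"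
      using Sj Zt Kxi s by (simp add: field_simps)
    have "j \<noteq> 0"
    proof
      assume "j = 0"
      then have "0 \<le> - ((h 0 - 2 * \<theta>) / ?s)" using Sj2 by simp
      moreover have "h 0 - 2 * \<theta> > 0" using hm[of 0] th Tpos by simp
      ultimately show False using s by (simp add: field_simps)
    qed
    then show ?thesis using j(1) Sj2 \<omega> by auto
  qed
  qed
qed

end

context core begin

lemma Sset_prob:
  assumes e: "\<epsilon> > 0" and d: "\<delta> > 0" and md: "\<mu> * \<delta> < 1" and j: "1 \<le> j"
    and H: "0 \<le> H"
  shows "prob {\<omega> \<in> space M. (\<Sum>k<j. exp (- \<mu> * (real k * \<delta>)) * (W (real (Suc k) * \<delta>) \<omega> - W (real k * \<delta>) \<omega>))
            \<le> - (H / (sqrt \<epsilon> * \<sigma>))}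
         \<le> exp (- (H\<^sup>2 * (1 - \<mu> * \<delta>) / (2 * \<sigma>\<^sup>2 * tau (real j * \<delta>))) / \<epsilon>)"
proof -
  define ts where "ts k = real k * \<delta>" for k :: nat
  define c where "c k = exp (- \<mu> * (real k * \<delta>))" for k :: nat
  define v where "v = (\<Sum>k<j. (c k)\<^sup>2 * (ts (Suc k) - ts k))"
  define s where "s = sqrt \<epsilon> * \<sigma>"
  have s: "s > 0" using e sig by (simp add: s_def)
  have veq: "v = (\<Sum>k<j. (exp (- \<mu> * (real k * \<delta>)))\<^sup>2 * \<delta>)"
    unfolding v_def c_def ts_def by (intro sum.cong) (auto simp: algebra_simps)
  have vpos: "v > 0" unfolding veq using j d by (intro sum_pos) (auto simp: lessThan_empty_iff)
  have vle: "v \<le> tau (real j * \<delta>) / (1 - \<mu> * \<delta>)"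
    unfolding veq tau_def using riemann_upper[OF mu d md, of j] by simp
  have taup: "tau (real j * \<delta>) > 0" using j d by (intro tau_pos) simp
  have md': "1 - \<mu> * \<delta> > 0" using md by simp
  have "prob {\<omega> \<in> space M. (\<Sum>k<j. c k * (W (ts (Suc k)) \<omega> - W (ts k) \<omega>)) \<le> - (H / s)}
      \<le> exp (- (H / s)\<^sup>2 / (2 * v))"
    by (rule grid_chernoff[OF _ _ v_def vpos]) (use d H s in \<open>auto simp: ts_def\<close>)
  also have "\<dots> \<le> exp (- (H\<^sup>2 * (1 - \<mu> * \<delta>) / (2 * \<sigma>\<^sup>2 * tau (real j * \<delta>))) / \<epsilon>)"
  proof -
    have "v * (1 - \<mu> * \<delta>) \<le> tau (real j * \<delta>)" using vle md' by (simp add: field_simps)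
    then have a: "1 - \<mu> * \<delta> \<le> tau (real j * \<delta>) / v" using vpos by (simp add: le_divide_eq mult.commute)
    have b: "(1 - \<mu> * \<delta>) / tau (real j * \<delta>) \<le> (tau (real j * \<delta>) / v) / tau (real j * \<delta>)"
      using a taup by (intro divide_right_mono) auto
    have c: "(tau (real j * \<delta>) / v) / tau (real j * \<delta>) = 1 / v" using taup by simp
    have P: "(H / s)\<^sup>2 / (2 * v) = H\<^sup>2 / (2 * \<sigma>\<^sup>2 * \<epsilon>) * (1 / v)"
      using e by (simp add: s_def power_divide power_mult_distrib)
    have Q: "H\<^sup>2 * (1 - \<mu> * \<delta>) / (2 * \<sigma>\<^sup>2 * tau (real j * \<delta>)) / \<epsilon> = H\<^sup>2 / (2 * \<sigma>\<^sup>2 * \<epsilon>) * ((1 - \<mu> * \<delta>) / tau (real j * \<delta>))"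
      by (simp add: field_simps)
    have "H\<^sup>2 * (1 - \<mu> * \<delta>) / (2 * \<sigma>\<^sup>2 * tau (real j * \<delta>)) / \<epsilon> \<le> (H / s)\<^sup>2 / (2 * v)"
      unfolding P Q using b c e by (intro mult_left_mono) auto
    then show ?thesis by simp
  qed
  finally show ?thesis by (simp add: ts_def c_def s_def)
qed

end

context core begin

lemma upper_bound:
  assumes Rmin: "\<And>t. t \<in> {0<..T} \<Longrightarrow> R \<le> F t" and g: "\<gamma> > 0"
  shows "eventually (\<lambda>\<epsilon>. prob (E \<epsilon>) \<le> exp (- (R - \<gamma>) / \<epsilon>)) (at_right 0)"
proof -
  obtain t0 where t0: "t0 \<in> {0..T}" "\<And>y. y \<in> {0..T} \<Longrightarrow> h t0 \<le> h y"
    using continuous_attains_inf[OF compact_Icc _ h_cont] Tpos by auto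
  define hmin where "hmin = h t0"
  have hm: "hmin > 0" "\<And>t. t \<in> {0..T} \<Longrightarrow> hmin \<le> h t" using h_pos t0 by (auto simp: hmin_def)
  define \<eta> where "\<eta> = min (1/2) (\<gamma> / (2 * (\<bar>R\<bar> + 1)))"
  have \<eta>: "0 < \<eta>" "\<eta> \<le> 1/2"
  proof -
    show "0 < \<eta>" using g unfolding \<eta>_def by (simp add: abs_add_one_gt_zero)
    show "\<eta> \<le> 1/2" unfolding \<eta>_def by (rule min.cobounded1)
  qed
  have \<eta>R: "\<eta> * \<bar>R\<bar> \<le> \<gamma> / 2"
  proof -
    have "\<eta> * \<bar>R\<bar> \<le> (\<gamma> / (2 * (\<bar>R\<bar> + 1))) * \<bar>R\<bar>" by (intro mult_right_mono) (auto simp: \<eta>_def)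
    also have "\<dots> \<le> (\<gamma> / (2 * (\<bar>R\<bar> + 1))) * (\<bar>R\<bar> + 1)" using g by (intro mult_left_mono) auto
    also have "\<dots> = \<gamma> / 2" by (simp add: field_simps)
    finally show ?thesis .
  qed
  define \<theta> where "\<theta> = hmin * \<eta> / 8"
  have \<theta>: "0 < \<theta>" "2 * \<theta> < hmin" "4 * \<theta> = hmin * \<eta> / 2"
    using hm \<eta> by (auto simp: \<theta>_def field_simps)
  have "uniformly_continuous_on {0..T} h" by (rule compact_uniformly_continuous[OF h_cont compact_Icc])
  then obtain d where d: "d > 0" and dd0: "\<forall>t\<in>{0..T}. \<forall>t'\<in>{0..T}. dist t' t < d \<longrightarrow> dist (h t') (h t) < \<theta>"
    unfolding uniformly_continuous_on_def using \<theta>(1) by blast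
  have dd: "dist (h t') (h t) < \<theta>" if "t \<in> {0..T}" "t' \<in> {0..T}" "dist t' t < d" for t t'
    using dd0 that by blast
  define K where "K = 1 + 4 * \<mu> * T"
  have K: "K \<ge> 1" using mu Tpos by (simp add: K_def)
  define \<delta>0 where "\<delta>0 = min (min d T) (min (\<eta> / (2 * \<mu>)) (\<theta>\<^sup>2 / (2 * K\<^sup>2 * \<sigma>\<^sup>2 * (\<bar>R\<bar> + 1))))"
  have \<delta>0: "\<delta>0 > 0" using d Tpos \<eta> mu \<theta> K sig by (simp add: \<delta>0_def)
  obtain N :: nat where N: "T / \<delta>0 < real N" using reals_Archimedean2 by blast
  have Npos: "N > 0"
  proof -
    have "0 < T / \<delta>0" using Tpos \<delta>0 by simp
    then have "0 < real N" using N by linarith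
    then show ?thesis by simp
  qed
  define \<delta> where "\<delta> = T / real N"
  have \<delta>: "\<delta> > 0" "\<delta> * real N = T" using Tpos Npos by (simp_all add: \<delta>_def)
  have \<delta>lt: "\<delta> < \<delta>0" using N \<delta>0 Npos by (simp add: \<delta>_def field_simps)
  have \<delta>d: "\<delta> < d" and \<delta>\<eta>: "\<mu> * \<delta> \<le> \<eta> / 2" and \<delta>\<theta>: "\<delta> \<le> \<theta>\<^sup>2 / (2 * K\<^sup>2 * \<sigma>\<^sup>2 * (\<bar>R\<bar> + 1))"
  proof -
    show "\<delta> < d" using \<delta>lt by (simp add: \<delta>0_def)
    have "\<delta> \<le> \<eta> / (2 * \<mu>)" using \<delta>lt by (simp add: \<delta>0_def)
    then show "\<mu> * \<delta> \<le> \<eta> / 2" using mu by (simp add: field_simps)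
    show "\<delta> \<le> \<theta>\<^sup>2 / (2 * K\<^sup>2 * \<sigma>\<^sup>2 * (\<bar>R\<bar> + 1))" using \<delta>lt by (simp add: \<delta>0_def)
  qed
  have md: "\<mu> * \<delta> < 1" using \<delta>\<eta> \<eta> by simp
  have uc: "\<bar>h t - h t'\<bar> < \<theta>" if "t \<in> {0..T}" "t' \<in> {0..T}" "\<bar>t - t'\<bar> \<le> \<delta>" for t t'
    using dd[OF that(2,1)] that(3) \<delta>d by (simp add: dist_real_def)
  have rate_osc: "\<bar>R\<bar> + 1 \<le> \<theta>\<^sup>2 / (2 * K\<^sup>2 * \<sigma>\<^sup>2 * \<delta>)"
  proof -
    have Dp: "0 < 2 * K\<^sup>2 * \<sigma>\<^sup>2" using K sig by simp
    have D1: "0 < 2 * K\<^sup>2 * \<sigma>\<^sup>2 * (\<bar>R\<bar> + 1)" using Dp by (simp add: abs_add_one_gt_zero)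
    have "\<delta> * (2 * K\<^sup>2 * \<sigma>\<^sup>2 * (\<bar>R\<bar> + 1)) \<le> \<theta>\<^sup>2" using \<delta>\<theta> D1 by (simp add: le_divide_eq)
    then have "(\<bar>R\<bar> + 1) * (2 * K\<^sup>2 * \<sigma>\<^sup>2 * \<delta>) \<le> \<theta>\<^sup>2" by (simp add: mult_ac)
    moreover have "0 < 2 * K\<^sup>2 * \<sigma>\<^sup>2 * \<delta>" using Dp \<delta>(1) by simp
    ultimately show ?thesis by (simp add: pos_le_divide_eq)
  qed
  define C where "C = real N * (2 / pc) + real N"
  have ev1: "eventually (\<lambda>\<epsilon>. C * exp (- (\<gamma> / 2) / \<epsilon>) \<le> 1) (at_right 0)"
    by (rule ev_small_exp) (use g in simp)
  have ev2: "eventually (\<lambda>\<epsilon>. \<epsilon> > (0::real)) (at_right 0)" by (simp add: eventually_at_right_less)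
  show ?thesis using ev1 ev2
  proof eventually_elim
    case (elim \<epsilon>)
    define s where "s = sqrt \<epsilon> * \<sigma>"
    have s: "s > 0" using elim sig by (simp add: s_def)
    have s2: "s\<^sup>2 = \<epsilon> * \<sigma>\<^sup>2" using elim by (simp add: s_def power_mult_distrib)
    define \<xi> where "\<xi> = \<theta> / (K * s)"
    have \<xi>: "\<xi> > 0" using \<theta> K s by (simp add: \<xi>_def)
    define ee where "ee = exp (- (R - \<gamma> / 2) / \<epsilon>)"
    define Ok where "Ok k = osc (real k * \<delta>) \<delta> \<xi>" for k
    define Sj where "Sj j = {\<omega> \<in> space M. (\<Sum>k<j. exp (- \<mu> * (real k * \<delta>)) * (W (real (Suc k) * \<delta>) \<omega> - W (real k * \<delta>) \<omega>))
            \<le> - ((h (real j * \<delta>) - 2 * \<theta>) / s)}" for j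
    have Ok_m[measurable]: "Ok k \<in> sets M" for k by (simp add: Ok_def)
    have Sj_m[measurable]: "Sj j \<in> sets M" for j unfolding Sj_def by measurable
    have incl: "E \<epsilon> \<subseteq> (\<Union>k<N. Ok k) \<union> (\<Union>j\<in>{1..<N}. Sj j)"
      using ub_incl[OF elim(2) Npos \<delta>(2) \<delta>(1) \<theta>(1) \<theta>(2) hm(2) uc]
      unfolding Ok_def Sj_def \<xi>_def K_def s_def by simp
    have PO: "prob (Ok k) \<le> (2 / pc) * ee" for k
    proof -
      have "prob (Ok k) \<le> 2 * exp (- \<xi>\<^sup>2 / (2 * \<delta>)) / pc"
        unfolding Ok_def by (rule osc_prob) (use \<delta> \<xi> in auto)
      also have "exp (- \<xi>\<^sup>2 / (2 * \<delta>)) \<le> ee"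
      proof -
        have xi2: "\<xi>\<^sup>2 / (2 * \<delta>) = (\<theta>\<^sup>2 / (2 * K\<^sup>2 * \<sigma>\<^sup>2 * \<delta>)) / \<epsilon>"
        proof -
          have "\<xi>\<^sup>2 = \<theta>\<^sup>2 / (K\<^sup>2 * (\<epsilon> * \<sigma>\<^sup>2))" unfolding \<xi>_def s2[symmetric] by (simp add: power_divide power_mult_distrib)
          then show ?thesis using elim(2) sig K \<delta>(1) by (simp add: field_simps)
        qed
        have "R - \<gamma> / 2 \<le> \<theta>\<^sup>2 / (2 * K\<^sup>2 * \<sigma>\<^sup>2 * \<delta>)" using rate_osc g by linarith
        then have "(R - \<gamma> / 2) / \<epsilon> \<le> \<xi>\<^sup>2 / (2 * \<delta>)" unfolding xi2 using elim(2) by (intro divide_right_mono) auto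
        moreover have "(- \<xi>\<^sup>2) / (2 * \<delta>) = - (\<xi>\<^sup>2 / (2 * \<delta>))" "- (R - \<gamma> / 2) / \<epsilon> = - ((R - \<gamma> / 2) / \<epsilon>)" by (simp_all only: minus_divide_left)
        ultimately show ?thesis unfolding ee_def by (simp only: exp_le_cancel_iff neg_le_iff_le)
      qed
      then have "2 * exp (- \<xi>\<^sup>2 / (2 * \<delta>)) / pc \<le> 2 * ee / pc" using pc_pos by (simp add: divide_right_mono)
      finally show ?thesis by simp
    qed
    have PS: "prob (Sj j) \<le> ee" if j: "j \<in> {1..<N}" for j
    proof -
      let ?hj = "h (real j * \<delta>)" and ?tj = "tau (real j * \<delta>)"
      have jT: "real j * \<delta> \<in> {0<..T}"
      proof -
        have "real j * \<delta> \<le> real N * \<delta>" using j \<delta> by (intro mult_right_mono) auto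
        then show ?thesis using j \<delta> by (auto simp: mult.commute)
      qed
      have hj: "hmin \<le> ?hj" using hm(2)[of "real j * \<delta>"] jT by simp
      have H0: "0 \<le> ?hj - 2 * \<theta>" using hj \<theta> by linarith
      have tj: "?tj > 0" using jT by (intro tau_pos) simp
      have "prob (Sj j) \<le> exp (- ((?hj - 2 * \<theta>)\<^sup>2 * (1 - \<mu> * \<delta>) / (2 * \<sigma>\<^sup>2 * ?tj)) / \<epsilon>)"
        unfolding Sj_def s_def by (rule Sset_prob[OF elim(2) \<delta>(1) md _ H0]) (use j in simp)
      also have "\<dots> \<le> ee"
      proof -
        have a: "(1 - \<eta> / 2) * ?hj\<^sup>2 \<le> (?hj - 2 * \<theta>)\<^sup>2"
        proof -
          have "4 * \<theta> * ?hj \<le> (hmin * \<eta> / 2) * ?hj" by (simp only: \<theta>(3) order_refl)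
          also have "\<dots> \<le> (?hj * \<eta> / 2) * ?hj" using hj \<eta> hm by (intro mult_right_mono) auto
          finally have "4 * \<theta> * ?hj \<le> \<eta> / 2 * ?hj\<^sup>2" by (simp add: power2_eq_square mult_ac)
          moreover have "(?hj - 2 * \<theta>)\<^sup>2 = ?hj\<^sup>2 - 4 * \<theta> * ?hj + 4 * \<theta>\<^sup>2" by (simp add: power2_eq_square algebra_simps)
          moreover have "(1 - \<eta> / 2) * ?hj\<^sup>2 = ?hj\<^sup>2 - \<eta> / 2 * ?hj\<^sup>2" by (simp add: algebra_simps)
          moreover have "0 \<le> 4 * \<theta>\<^sup>2" by simp
          ultimately show ?thesis by linarith
        qed
        have b: "1 - \<eta> / 2 \<le> 1 - \<mu> * \<delta>" using \<delta>\<eta> by simp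
        have "(1 - \<eta>) * ?hj\<^sup>2 \<le> ((1 - \<eta> / 2) * ?hj\<^sup>2) * (1 - \<eta> / 2)"
          by (simp add: algebra_simps power2_eq_square) (use \<eta> in \<open>simp add: mult_nonneg_nonneg\<close>)
        also have "\<dots> \<le> (?hj - 2 * \<theta>)\<^sup>2 * (1 - \<mu> * \<delta>)"
          using a b \<eta> by (intro mult_mono) auto
        finally have c: "(1 - \<eta>) * ?hj\<^sup>2 \<le> (?hj - 2 * \<theta>)\<^sup>2 * (1 - \<mu> * \<delta>)" .
        have "F (real j * \<delta>) = ?hj\<^sup>2 / (2 * \<sigma>\<^sup>2 * ?tj)" by (simp add: F_def)
        have d1: "(1 - \<eta>) * F (real j * \<delta>) \<le> (?hj - 2 * \<theta>)\<^sup>2 * (1 - \<mu> * \<delta>) / (2 * \<sigma>\<^sup>2 * ?tj)"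
          unfolding F_def using c tj sig by (simp add: divide_right_mono)
        have d2: "(1 - \<eta>) * R \<le> (1 - \<eta>) * F (real j * \<delta>)" using Rmin[OF jT] \<eta> by (intro mult_left_mono) auto
        have d3: "R - \<gamma> / 2 \<le> (1 - \<eta>) * R"
        proof -
          have "\<eta> * R \<le> \<eta> * \<bar>R\<bar>" using \<eta> by (intro mult_left_mono) auto
          then show ?thesis using \<eta>R by (simp add: algebra_simps)
        qed
        have "(R - \<gamma> / 2) / \<epsilon> \<le> ((?hj - 2 * \<theta>)\<^sup>2 * (1 - \<mu> * \<delta>) / (2 * \<sigma>\<^sup>2 * ?tj)) / \<epsilon>"
          using d1 d2 d3 elim(2) by (intro divide_right_mono) auto
        moreover have "- ((?hj - 2 * \<theta>)\<^sup>2 * (1 - \<mu> * \<delta>) / (2 * \<sigma>\<^sup>2 * ?tj)) / \<epsilon> = - (((?hj - 2 * \<theta>)\<^sup>2 * (1 - \<mu> * \<delta>) / (2 * \<sigma>\<^sup>2 * ?tj)) / \<epsilon>)"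
          "- (R - \<gamma> / 2) / \<epsilon> = - ((R - \<gamma> / 2) / \<epsilon>)" by (simp_all only: minus_divide_left)
        ultimately show ?thesis unfolding ee_def by (simp only: exp_le_cancel_iff neg_le_iff_le)
      qed
      finally show ?thesis .
    qed
    have "prob (E \<epsilon>) \<le> prob ((\<Union>k<N. Ok k) \<union> (\<Union>j\<in>{1..<N}. Sj j))"
      by (rule finite_measure_mono[OF incl]) measurable
    also have "\<dots> \<le> prob (\<Union>k<N. Ok k) + prob (\<Union>j\<in>{1..<N}. Sj j)"
      by (rule measure_Un_le) measurable
    also have "\<dots> \<le> (\<Sum>k<N. prob (Ok k)) + (\<Sum>j\<in>{1..<N}. prob (Sj j))"
      by (intro add_mono finite_measure_subadditive_finite) auto
    also have "\<dots> \<le> (\<Sum>k<N. (2 / pc) * ee) + (\<Sum>j\<in>{1..<N}. ee)"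
      by (intro add_mono sum_mono PO PS)
    also have "\<dots> = real N * (2 / pc) * ee + real (N - 1) * ee" by simp
    also have "\<dots> \<le> C * ee"
    proof -
      have "real (N - 1) \<le> real N" by simp
      then have "real (N - 1) * ee \<le> real N * ee" unfolding ee_def by (intro mult_right_mono) auto
      then show ?thesis unfolding C_def by (simp add: distrib_right)
    qed
    also have "C * ee = (C * exp (- (\<gamma> / 2) / \<epsilon>)) * exp (- (R - \<gamma>) / \<epsilon>)"
    proof -
      have "- (\<gamma> / 2) / \<epsilon> + - (R - \<gamma>) / \<epsilon> = (- (\<gamma> / 2) + - (R - \<gamma>)) / \<epsilon>" by (rule add_divide_distrib[symmetric])
      also have "- (\<gamma> / 2) + - (R - \<gamma>) = - (R - \<gamma> / 2)" by simp
      finally have "exp (- (R - \<gamma> / 2) / \<epsilon>) = exp (- (\<gamma> / 2) / \<epsilon>) * exp (- (R - \<gamma>) / \<epsilon>)" by (simp add: exp_add[symmetric])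
      then show ?thesis unfolding ee_def by simp
    qed
    also have "\<dots> \<le> 1 * exp (- (R - \<gamma>) / \<epsilon>)" using elim(1) by (intro mult_right_mono) auto
    finally show ?case by simp
  qed
qed

end

context bm_ctx begin

lemma prod_lower:
  assumes D: "\<Delta> > 0" and n: "n > 0" and a: "\<And>k. k < n \<Longrightarrow> a k \<ge> 0"
  shows "exp (- (\<Sum>k<n. (a k + sqrt \<Delta>)\<^sup>2 / (2 * \<Delta>))) / (sqrt (2 * pi)) ^ n
     \<le> prob {\<omega> \<in> space M. \<forall>k<n. W (real (Suc k) * \<Delta>) \<omega> - W (real k * \<Delta>) \<omega> \<le> - a k}"
proof -
  define Y where "Y k \<omega> = W (real (Suc k) * \<Delta>) \<omega> - W (real k * \<Delta>) \<omega>" for k \<omega>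
  have Ym[measurable]: "Y k \<in> borel_measurable M" for k unfolding Y_def by measurable
  have ind: "indep_vars (\<lambda>_. borel) Y {..<n}"
    unfolding Y_def by (rule inc_indep[where ts="\<lambda>k. real k * \<Delta>"]) (use D in auto)
  have eqA: "{\<omega> \<in> space M. \<forall>k<n. Y k \<omega> \<le> - a k} = (\<Inter>k\<in>{..<n}. Y k -` {.. - a k} \<inter> space M)"
    using n by auto
  have P: "prob {\<omega> \<in> space M. \<forall>k<n. Y k \<omega> \<le> - a k} = (\<Prod>k<n. prob (Y k -` {.. - a k} \<inter> space M))"
    unfolding eqA by (rule indep_varsD[OF ind]) (use n in auto)
  have single: "exp (- ((a k + sqrt \<Delta>)\<^sup>2 / (2 * \<Delta>))) / sqrt (2 * pi) \<le> prob (Y k -` {.. - a k} \<inter> space M)"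
    if k: "k < n" for k
  proof -
    have sD: "sqrt \<Delta> > 0" using D by simp
    have "exp (- ((a k + sqrt \<Delta>)\<^sup>2 / (2 * \<Delta>))) / sqrt (2 * pi)
        = (- a k - (- a k - sqrt \<Delta>)) * normal_density 0 (sqrt (real (Suc k) * \<Delta> - real k * \<Delta>)) (a k + sqrt \<Delta>)"
    proof -
      have "real (Suc k) * \<Delta> - real k * \<Delta> = \<Delta>" by (simp add: algebra_simps)
      moreover have "sqrt (2 * pi * \<Delta>) = sqrt (2 * pi) * sqrt \<Delta>" by (simp add: real_sqrt_mult)
      ultimately show ?thesis unfolding normal_density_def using D
        by (simp add: field_simps)
    qed
    also have "\<dots> \<le> prob {\<omega> \<in> space M. - a k - sqrt \<Delta> \<le> W (real (Suc k) * \<Delta>) \<omega> - W (real k * \<Delta>) \<omega>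
                     \<and> W (real (Suc k) * \<Delta>) \<omega> - W (real k * \<Delta>) \<omega> \<le> - a k}"
      by (rule inc_interval_lower) (use D a[OF k] sD in \<open>auto simp: algebra_simps\<close>)
    also have "\<dots> \<le> prob (Y k -` {.. - a k} \<inter> space M)"
    proof (rule finite_measure_mono)
      show "Y k -` {.. - a k} \<inter> space M \<in> sets M" by measurable
    qed (auto simp: Y_def)
    finally show ?thesis .
  qed
  have "exp (- (\<Sum>k<n. (a k + sqrt \<Delta>)\<^sup>2 / (2 * \<Delta>))) / (sqrt (2 * pi)) ^ n
      = (\<Prod>k<n. exp (- ((a k + sqrt \<Delta>)\<^sup>2 / (2 * \<Delta>))) / sqrt (2 * pi))"
    by (simp add: exp_sum[symmetric] prod_dividef sum_negf)
  also have "\<dots> \<le> (\<Prod>k<n. prob (Y k -` {.. - a k} \<inter> space M))"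
    by (rule prod_mono) (use single in auto)
  finally show ?thesis using P by (simp add: Y_def)
qed

end


context core begin

lemma lb_incl:
  assumes e: "\<epsilon> > 0" and L: "L \<in> {0<..T}" and n: "n > 0" and D: "\<Delta> * real n = L" and th: "\<theta> > 0"
    and tn: "\<tau>n = (\<Sum>k<n. (exp (- \<mu> * (real k * \<Delta>)))\<^sup>2 * \<Delta>)" "\<tau>n > 0"
    and a: "\<And>k. a k = (h L + \<theta>) * exp (- \<mu> * (real k * \<Delta>)) * \<Delta> / (\<tau>n * (sqrt \<epsilon> * \<sigma>))"
  shows "{\<omega> \<in> space M. \<forall>k<n. W (real (Suc k) * \<Delta>) \<omega> - W (real k * \<Delta>) \<omega> \<le> - a k}
           - (\<Union>k<n. osc (real k * \<Delta>) \<Delta> (\<theta> / (2 * \<mu> * L * (sqrt \<epsilon> * \<sigma>)))) \<subseteq> E \<epsilon>"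
proof
  fix \<omega> assume \<omega>A: "\<omega> \<in> {\<omega> \<in> space M. \<forall>k<n. W (real (Suc k) * \<Delta>) \<omega> - W (real k * \<Delta>) \<omega> \<le> - a k}
           - (\<Union>k<n. osc (real k * \<Delta>) \<Delta> (\<theta> / (2 * \<mu> * L * (sqrt \<epsilon> * \<sigma>))))"
  define s where "s = sqrt \<epsilon> * \<sigma>"
  define \<xi> where "\<xi> = \<theta> / (2 * \<mu> * L * s)"
  have s: "s > 0" using e sig by (simp add: s_def)
  have Lp: "L > 0" "L \<le> T" using L by auto
  have Dp: "\<Delta> > 0"
  proof -
    have "0 < \<Delta> * real n" using D Lp by simp
    then show ?thesis using n by (simp add: zero_less_mult_iff)
  qed
  have \<omega>: "\<omega> \<in> space M" and Y: "\<And>k. k < n \<Longrightarrow> W (real (Suc k) * \<Delta>) \<omega> - W (real k * \<Delta>) \<omega> \<le> - a k"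
    and no: "\<And>k. k < n \<Longrightarrow> \<omega> \<notin> osc (real k * \<Delta>) \<Delta> \<xi>"
    using \<omega>A by (auto simp: \<xi>_def s_def)
  have oscb: "\<bar>W r \<omega> - W (real k * \<Delta>) \<omega>\<bar> \<le> \<xi>" if "k < n" "real k * \<Delta> \<le> r" "r \<le> real k * \<Delta> + \<Delta>" for k r
    using osc_cont[OF \<omega> _ Dp no[OF that(1)]] that Dp by auto
  let ?Z = "Zp \<mu> (\<lambda>s. W s \<omega>)"
  let ?S = "(\<Sum>k<n. exp (- \<mu> * (real k * \<Delta>)) * (W (real (Suc k) * \<Delta>) \<omega> - W (real k * \<Delta>) \<omega>))"
  have tele: "\<bar>?Z (real n * \<Delta>) - ?S\<bar> \<le> 2 * \<mu> * (real n * \<Delta>) * \<xi>"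
    by (rule Zp_tele[OF mu W_cont[OF \<omega>] W0[OF \<omega>] Dp]) (use oscb in auto)
  have nD: "real n * \<Delta> = L" using D by (simp add: mult.commute)
  have xiL: "2 * \<mu> * L * \<xi> = \<theta> / s" using mu Lp s by (simp add: \<xi>_def)
  have "?S \<le> (\<Sum>k<n. exp (- \<mu> * (real k * \<Delta>)) * (- a k))"
    using Y by (intro sum_mono mult_left_mono) auto
  also have "\<dots> = - ((h L + \<theta>) / (\<tau>n * s) * (\<Sum>k<n. (exp (- \<mu> * (real k * \<Delta>)))\<^sup>2 * \<Delta>))"
    unfolding a s_def sum_distrib_left sum_negf[symmetric]
    by (intro sum.cong) (auto simp: power2_eq_square field_simps)
  also have "\<dots> = - ((h L + \<theta>) / s)" unfolding tn(1)[symmetric] using tn(2) by simp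
  finally have Sle: "?S \<le> - ((h L + \<theta>) / s)" .
  have "?Z L \<le> ?S + \<theta> / s" using tele nD xiL by (simp add: abs_le_iff)
  also have "\<dots> \<le> - ((h L + \<theta>) / s) + \<theta> / s" using Sle by simp
  also have "\<dots> = - h L / s" by (simp add: add_divide_distrib diff_divide_distrib)
  finally have "?Z L \<le> - h L / s" .
  then have "X \<epsilon> L \<omega> \<le> b L" using X_le_iff[OF e \<omega>, of L] Lp by (simp add: s_def)
  then show "\<omega> \<in> E \<epsilon>" using \<omega> Lp by (auto simp: E_def)
qed

end

context core begin

lemma lower_bound:
  assumes L: "L \<in> {0<..T}" and g: "\<gamma> > 0"
  shows "eventually (\<lambda>\<epsilon>. exp (- (F L + \<gamma>) / \<epsilon>) \<le> prob (E \<epsilon>)) (at_right 0)"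
proof -
  have Lp: "L > 0" "L \<le> T" using L by auto
  define hL where "hL = h L"
  have hL: "hL > 0" using h_pos[of L] Lp by (simp add: hL_def)
  define \<tau>L where "\<tau>L = tau L"
  have \<tau>L: "\<tau>L > 0" using tau_pos Lp by (simp add: \<tau>L_def)
  define R where "R = F L"
  have R: "R = hL\<^sup>2 / (2 * \<sigma>\<^sup>2 * \<tau>L)" by (simp add: R_def F_def hL_def \<tau>L_def)
  have R0: "R \<ge> 0" unfolding R using \<tau>L by simp
  define \<theta> where "\<theta> = min 1 (\<gamma> * \<sigma>\<^sup>2 * \<tau>L / (2 * (2 * hL + 1)))"
  have \<theta>: "\<theta> > 0" "\<theta> \<le> 1" using g sig \<tau>L hL by (simp_all add: \<theta>_def)
  have th_rate: "(hL + \<theta>)\<^sup>2 / (2 * \<sigma>\<^sup>2 * \<tau>L) \<le> R + \<gamma> / 4"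
  proof -
    have "\<theta> * (2 * hL + 1) \<le> (\<gamma> * \<sigma>\<^sup>2 * \<tau>L / (2 * (2 * hL + 1))) * (2 * hL + 1)"
      using hL by (intro mult_right_mono) (auto simp: \<theta>_def)
    also have "\<dots> = \<gamma> * \<sigma>\<^sup>2 * \<tau>L / 2" using hL by (simp add: field_simps)
    finally have a: "\<theta> * (2 * hL + 1) \<le> \<gamma> * \<sigma>\<^sup>2 * \<tau>L / 2" .
    have "(hL + \<theta>)\<^sup>2 = hL\<^sup>2 + \<theta> * (2 * hL + \<theta>)" by (simp add: power2_eq_square algebra_simps)
    also have "\<dots> \<le> hL\<^sup>2 + \<theta> * (2 * hL + 1)" using \<theta> by (intro add_left_mono mult_left_mono) auto
    finally have b: "(hL + \<theta>)\<^sup>2 \<le> hL\<^sup>2 + \<gamma> * \<sigma>\<^sup>2 * \<tau>L / 2" using a by linarith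
    have pos: "0 < 2 * \<sigma>\<^sup>2 * \<tau>L" using sig \<tau>L by simp
    have "(hL + \<theta>)\<^sup>2 / (2 * \<sigma>\<^sup>2 * \<tau>L) \<le> (hL\<^sup>2 + \<gamma> * \<sigma>\<^sup>2 * \<tau>L / 2) / (2 * \<sigma>\<^sup>2 * \<tau>L)"
      using b pos by (intro divide_right_mono) auto
    also have "\<dots> = R + \<gamma> / 4" unfolding R using sig \<tau>L by (simp add: add_divide_distrib)
    finally show ?thesis .
  qed
  define Kc where "Kc = (R + \<gamma> + 1) * 8 * \<mu>\<^sup>2 * L ^ 3 * \<sigma>\<^sup>2 / \<theta>\<^sup>2"
  obtain n :: nat where nK: "Kc < real n" using reals_Archimedean2 by blast
  have Kc0: "Kc > 0" using R0 g mu Lp sig \<theta> by (simp add: Kc_def)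
  have n: "n > 0" using nK Kc0 by simp
  define \<Delta> where "\<Delta> = L / real n"
  have \<Delta>: "\<Delta> > 0" "\<Delta> * real n = L" using Lp n by (simp_all add: \<Delta>_def)
  define \<tau>n where "\<tau>n = (\<Sum>k<n. (exp (- \<mu> * (real k * \<Delta>)))\<^sup>2 * \<Delta>)"
  have \<tau>nL: "\<tau>L \<le> \<tau>n"
  proof -
    have "real n * \<Delta> = L" using \<Delta> by (simp add: mult.commute)
    then show ?thesis using riemann_lower[OF mu \<Delta>(1), of n] by (simp add: \<tau>n_def \<tau>L_def tau_def)
  qed
  have \<tau>n: "\<tau>n > 0" using \<tau>nL \<tau>L by simp
  define B where "B k = (hL + \<theta>) * exp (- \<mu> * (real k * \<Delta>)) * \<Delta> / (\<tau>n * \<sigma>)" for k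
  have B0: "B k \<ge> 0" for k using hL \<theta> \<Delta> \<tau>n sig by (simp add: B_def)
  define G where "G \<epsilon> = (\<Sum>k<n. (B k + sqrt (\<epsilon> * \<Delta>))\<^sup>2 / (2 * \<Delta>)) + \<epsilon> * real n * ln (sqrt (2 * pi))" for \<epsilon>
  define G0 where "G0 = (\<Sum>k<n. (B k)\<^sup>2 / (2 * \<Delta>))"
  have G0eq: "G0 = (hL + \<theta>)\<^sup>2 / (2 * \<sigma>\<^sup>2 * \<tau>n)"
  proof -
    have "G0 = (\<Sum>k<n. ((hL + \<theta>)\<^sup>2 / (2 * \<sigma>\<^sup>2 * \<tau>n\<^sup>2)) * ((exp (- \<mu> * (real k * \<Delta>)))\<^sup>2 * \<Delta>))"
      unfolding G0_def B_def using \<Delta> \<tau>n sig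
      by (intro sum.cong) (auto simp: power2_eq_square field_simps)
    also have "\<dots> = ((hL + \<theta>)\<^sup>2 / (2 * \<sigma>\<^sup>2 * \<tau>n\<^sup>2)) * \<tau>n" unfolding \<tau>n_def by (simp add: sum_distrib_left)
    also have "\<dots> = (hL + \<theta>)\<^sup>2 / (2 * \<sigma>\<^sup>2 * \<tau>n)" using \<tau>n by (simp add: power2_eq_square)
    finally show ?thesis .
  qed
  have G0le: "G0 \<le> R + \<gamma> / 4"
  proof -
    have "(hL + \<theta>)\<^sup>2 / (2 * \<sigma>\<^sup>2 * \<tau>n) \<le> (hL + \<theta>)\<^sup>2 / (2 * \<sigma>\<^sup>2 * \<tau>L)"
      using \<tau>nL \<tau>L sig by (intro divide_left_mono) auto
    then show ?thesis using th_rate G0eq by simp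
  qed
  have Gt: "(G \<longlongrightarrow> G0) (at_right 0)"
  proof -
    have "((\<lambda>\<epsilon>. (\<Sum>k<n. (B k + sqrt (\<epsilon> * \<Delta>))\<^sup>2 / (2 * \<Delta>)) + \<epsilon> * real n * ln (sqrt (2 * pi)))
        \<longlongrightarrow> (\<Sum>k<n. (B k + sqrt (0 * \<Delta>))\<^sup>2 / (2 * \<Delta>)) + 0 * real n * ln (sqrt (2 * pi))) (at_right 0)"
      using \<Delta>(1) by (intro tendsto_intros) auto
    then show ?thesis using \<Delta>(1) by (simp add: G_def[abs_def] G0_def)
  qed
  have ev_G: "eventually (\<lambda>\<epsilon>. G \<epsilon> < G0 + \<gamma> / 4) (at_right 0)"
    using Gt g by (intro order_tendstoD(2)) auto
  define C where "C = real n * (2 / pc)"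
  have ev_C: "eventually (\<lambda>\<epsilon>. (C + 1) * exp (- (\<gamma> / 2) / \<epsilon>) \<le> 1) (at_right 0)"
    by (rule ev_small_exp) (use g in simp)
  have ev_pos: "eventually (\<lambda>\<epsilon>. \<epsilon> > (0::real)) (at_right 0)" by (simp add: eventually_at_right_less)
  show ?thesis using ev_G ev_C ev_pos unfolding R_def[symmetric]
  proof eventually_elim
    case (elim \<epsilon>)
    have e: "\<epsilon> > 0" using elim by simp
    define s where "s = sqrt \<epsilon> * \<sigma>"
    have s: "s > 0" using e sig by (simp add: s_def)
    define a where "a k = B k / sqrt \<epsilon>" for k
    have a0: "a k \<ge> 0" for k using B0 e by (simp add: a_def)
    have aeq: "a k = (h L + \<theta>) * exp (- \<mu> * (real k * \<Delta>)) * \<Delta> / (\<tau>n * (sqrt \<epsilon> * \<sigma>))" for k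
      by (simp add: a_def B_def hL_def field_simps)
    define \<xi> where "\<xi> = \<theta> / (2 * \<mu> * L * s)"
    define A where "A = {\<omega> \<in> space M. \<forall>k<n. W (real (Suc k) * \<Delta>) \<omega> - W (real k * \<Delta>) \<omega> \<le> - a k}"
    define Oc where "Oc = (\<Union>k<n. osc (real k * \<Delta>) \<Delta> \<xi>)"
    have Am[measurable]: "A \<in> sets M" unfolding A_def by measurable
    have Om[measurable]: "Oc \<in> sets M" unfolding Oc_def by measurable
    have incl: "A - Oc \<subseteq> E \<epsilon>"
      unfolding A_def Oc_def \<xi>_def s_def by (rule lb_incl[OF e L n \<Delta>(2) \<theta>(1) \<tau>n_def \<tau>n aeq])
    define q where "q = exp (- (R + \<gamma>) / \<epsilon>)"
    have PA: "exp (- (R + \<gamma> / 2) / \<epsilon>) \<le> prob A"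
    proof -
      have sq: "(a k + sqrt \<Delta>)\<^sup>2 / (2 * \<Delta>) = ((B k + sqrt (\<epsilon> * \<Delta>))\<^sup>2 / (2 * \<Delta>)) / \<epsilon>" for k
      proof -
        have "a k + sqrt \<Delta> = (B k + sqrt (\<epsilon> * \<Delta>)) / sqrt \<epsilon>"
          using e by (simp add: a_def real_sqrt_mult add_divide_distrib)
        then show ?thesis using e by (simp add: power_divide)
      qed
      have "exp (- (R + \<gamma> / 2) / \<epsilon>) \<le> exp (- G \<epsilon> / \<epsilon>)"
      proof -
        have "G \<epsilon> \<le> R + \<gamma> / 2" using elim(1) G0le by simp
        then have "G \<epsilon> / \<epsilon> \<le> (R + \<gamma> / 2) / \<epsilon>" using e by (intro divide_right_mono) auto
        moreover have "- (R + \<gamma> / 2) / \<epsilon> = - ((R + \<gamma> / 2) / \<epsilon>)" "- G \<epsilon> / \<epsilon> = - (G \<epsilon> / \<epsilon>)"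
          by (simp_all only: minus_divide_left)
        ultimately show ?thesis by (simp only: exp_le_cancel_iff neg_le_iff_le)
      qed
      also have "exp (- G \<epsilon> / \<epsilon>) = exp (- (\<Sum>k<n. (a k + sqrt \<Delta>)\<^sup>2 / (2 * \<Delta>))) / (sqrt (2 * pi)) ^ n"
      proof -
        have "- G \<epsilon> / \<epsilon> = - (\<Sum>k<n. (a k + sqrt \<Delta>)\<^sup>2 / (2 * \<Delta>)) - real n * ln (sqrt (2 * pi))"
          unfolding G_def sq using e by (simp add: sum_divide_distrib[symmetric] field_simps)
        moreover have "exp (real n * ln (sqrt (2 * pi))) = (sqrt (2 * pi)) ^ n"
          by (simp add: exp_of_nat_mult)
        ultimately show ?thesis by (simp add: exp_diff)
      qed
      also have "\<dots> \<le> prob A" unfolding A_def by (rule prod_lower[OF \<Delta>(1) n a0])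
      finally show ?thesis .
    qed
    have PO: "prob Oc \<le> C * q"
    proof -
      have each: "prob (osc (real k * \<Delta>) \<Delta> \<xi>) \<le> (2 / pc) * q" for k
      proof -
        have xi0: "\<xi> \<ge> 0" using \<theta> mu Lp s by (simp add: \<xi>_def)
        have "prob (osc (real k * \<Delta>) \<Delta> \<xi>) \<le> 2 * exp (- \<xi>\<^sup>2 / (2 * \<Delta>)) / pc"
          by (rule osc_prob) (use \<Delta> xi0 in auto)
        also have "exp (- \<xi>\<^sup>2 / (2 * \<Delta>)) \<le> q"
        proof -
          have x2: "\<xi>\<^sup>2 / (2 * \<Delta>) = (\<theta>\<^sup>2 * real n / (8 * \<mu>\<^sup>2 * L ^ 3 * \<sigma>\<^sup>2)) / \<epsilon>"
          proof -
            have "\<xi>\<^sup>2 = \<theta>\<^sup>2 / (4 * \<mu>\<^sup>2 * L\<^sup>2 * (\<epsilon> * \<sigma>\<^sup>2))"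
              unfolding \<xi>_def s_def using e by (simp add: power_divide power_mult_distrib)
            then show ?thesis unfolding \<Delta>_def using e mu Lp sig n
              by (simp add: field_simps power2_eq_square power3_eq_cube)
          qed
          have "R + \<gamma> \<le> \<theta>\<^sup>2 * real n / (8 * \<mu>\<^sup>2 * L ^ 3 * \<sigma>\<^sup>2)"
          proof -
            have p: "0 < 8 * \<mu>\<^sup>2 * L ^ 3 * \<sigma>\<^sup>2" using mu Lp sig by simp
            have "Kc * \<theta>\<^sup>2 \<le> real n * \<theta>\<^sup>2" using nK \<theta> by (intro mult_right_mono) auto
            moreover have "Kc * \<theta>\<^sup>2 = (R + \<gamma> + 1) * (8 * \<mu>\<^sup>2 * L ^ 3 * \<sigma>\<^sup>2)" using \<theta> by (simp add: Kc_def)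
            ultimately have "(R + \<gamma>) * (8 * \<mu>\<^sup>2 * L ^ 3 * \<sigma>\<^sup>2) \<le> \<theta>\<^sup>2 * real n" using p by (simp add: algebra_simps)
            then show ?thesis using p by (simp add: pos_le_divide_eq)
          qed
          then have "(R + \<gamma>) / \<epsilon> \<le> \<xi>\<^sup>2 / (2 * \<Delta>)" unfolding x2 using e by (intro divide_right_mono) auto
          moreover have "- (R + \<gamma>) / \<epsilon> = - ((R + \<gamma>) / \<epsilon>)" "(- \<xi>\<^sup>2) / (2 * \<Delta>) = - (\<xi>\<^sup>2 / (2 * \<Delta>))"
            by (simp_all only: minus_divide_left)
          ultimately show ?thesis unfolding q_def by (simp only: exp_le_cancel_iff neg_le_iff_le)
        qed
        then have "2 * exp (- \<xi>\<^sup>2 / (2 * \<Delta>)) / pc \<le> 2 * q / pc" using pc_pos by (simp add: divide_right_mono)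
        finally show ?thesis by simp
      qed
      have "prob Oc \<le> (\<Sum>k<n. prob (osc (real k * \<Delta>) \<Delta> \<xi>))"
        unfolding Oc_def by (rule finite_measure_subadditive_finite) auto
      also have "\<dots> \<le> (\<Sum>k<n. (2 / pc) * q)" by (rule sum_mono) (rule each)
      also have "\<dots> = C * q" by (simp add: C_def)
      finally show ?thesis .
    qed
    have PE: "prob A - prob Oc \<le> prob (E \<epsilon>)"
    proof -
      have "prob A \<le> prob ((A - Oc) \<union> Oc)" by (rule finite_measure_mono) auto
      also have "\<dots> \<le> prob (A - Oc) + prob Oc" by (rule measure_Un_le) auto
      also have "prob (A - Oc) \<le> prob (E \<epsilon>)" by (rule finite_measure_mono[OF incl E_meas[OF e]])
      finally show ?thesis by simp
    qed
    have "(C + 1) * q \<le> exp (- (R + \<gamma> / 2) / \<epsilon>)"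
    proof -
      have "exp (- (R + \<gamma> / 2) / \<epsilon>) = q / exp (- (\<gamma> / 2) / \<epsilon>)"
      proof -
        have "- (R + \<gamma>) / \<epsilon> - (- (\<gamma> / 2) / \<epsilon>) = - (R + \<gamma> / 2) / \<epsilon>"
          using e by (simp add: field_simps)
        then show ?thesis unfolding q_def by (simp add: exp_diff[symmetric])
      qed
      moreover have "(C + 1) * q * exp (- (\<gamma> / 2) / \<epsilon>) \<le> q"
        using elim(2) mult_left_mono[OF elim(2), of q] by (simp add: q_def mult_ac)
      ultimately show ?thesis by (simp add: le_divide_eq)
    qed
    moreover have "(C + 1) * q = C * q + q" by (simp add: algebra_simps)
    ultimately have "q \<le> prob A - prob Oc" using PA PO by linarith
    then show ?case using PE by (simp add: q_def)
  qed
qed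

end

context core begin

lemma core_limit:
  assumes L: "L \<in> {0<..T}" and Lmin: "\<And>t. t \<in> {0<..T} \<Longrightarrow> F L \<le> F t"
  shows "((\<lambda>\<epsilon>. \<epsilon> * ln (prob (E \<epsilon>))) \<longlongrightarrow> - F L) (at_right 0)"
proof (rule ev_conv)
  fix \<gamma> :: real assume g: "\<gamma> > 0"
  show "eventually (\<lambda>\<epsilon>. exp (- (F L + \<gamma>) / \<epsilon>) \<le> prob (E \<epsilon>) \<and> prob (E \<epsilon>) \<le> exp (- (F L - \<gamma>) / \<epsilon>)) (at_right 0)"
  proof -
    have 1: "eventually (\<lambda>\<epsilon>. exp (- (F L + \<gamma>) / \<epsilon>) \<le> prob (E \<epsilon>)) (at_right 0)"
      by (rule lower_bound[OF L g])
    have 2: "eventually (\<lambda>\<epsilon>. prob (E \<epsilon>) \<le> exp (- (F L - \<gamma>) / \<epsilon>)) (at_right 0)"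
      by (rule upper_bound[where R="F L"]) (use Lmin g in auto)
    show ?thesis using 1 2 by eventually_elim auto
  qed
qed

end

lemma bm_neg:
  assumes "std_brownian_motion M W"
  shows "std_brownian_motion M (\<lambda>t \<omega>. - W t \<omega>)"
proof -
  interpret bm_ctx M W by (rule bm_ctx.intro[OF assms])
  have d: "distributed M lborel (\<lambda>\<omega>. - W t \<omega> - - W s \<omega>) (normal_density 0 (sqrt (t - s)))"
    if "0 \<le> s" "s < t" for s t
  proof -
    have "distributed M lborel (\<lambda>x. 0 + (-1) * (W t x - W s x)) (normal_density (0 + (-1) * 0) (\<bar>-1\<bar> * sqrt (t - s)))"
      by (rule normal_density_affine[OF inc_distr[OF that]]) (use that in auto)
    then show ?thesis by simp
  qed
  have i: "indep_vars (\<lambda>_. borel) (\<lambda>i \<omega>. - W (ts (Suc i)) \<omega> - - W (ts i) \<omega>) {..<n}"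
    if "0 \<le> ts 0" "\<forall>i<n. ts i < ts (Suc i)" for ts :: "nat \<Rightarrow> real" and n
  proof -
    have "indep_vars (\<lambda>_. borel) (\<lambda>i x. (\<lambda>i y. - y) i (W (ts (Suc i)) x - W (ts i) x)) {..<n}"
      by (rule indep_vars_compose2[OF inc_indep]) (use that in auto)
    then show ?thesis by simp
  qed
  show ?thesis unfolding std_brownian_motion_def
    using ps W0 W_cont d i by (auto intro: continuous_on_minus)
qed

lemma sde_neg:
  assumes "solves_linear_sde M W \<mu> \<sigma> \<epsilon> x0 X"
  shows "solves_linear_sde M (\<lambda>t \<omega>. - W t \<omega>) \<mu> \<sigma> \<epsilon> (- x0) (\<lambda>t \<omega>. - X t \<omega>)"
  using assms unfolding solves_linear_sde_def
  by (auto intro: continuous_on_minus simp: algebra_simps)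

lemma inf_le0_iff:
  fixes g :: "real \<Rightarrow> real"
  assumes "continuous_on {0..T} g" "T \<ge> 0"
  shows "(INF t\<in>{0..T}. g t) \<le> 0 \<longleftrightarrow> (\<exists>t\<in>{0..T}. g t \<le> 0)"
proof -
  obtain t0 where t0: "t0 \<in> {0..T}" "\<And>y. y \<in> {0..T} \<Longrightarrow> g t0 \<le> g y"
    using continuous_attains_inf[OF compact_Icc _ assms(1)] assms(2) by auto
  have "(INF t\<in>{0..T}. g t) = g t0" by (rule cInf_eq_minimum) (use t0 in auto)
  then show ?thesis using t0 by (metis order_trans)
qed

lemma sup_ge0_iff:
  fixes g :: "real \<Rightarrow> real"
  assumes "continuous_on {0..T} g" "T \<ge> 0"
  shows "(SUP t\<in>{0..T}. g t) \<ge> 0 \<longleftrightarrow> (\<exists>t\<in>{0..T}. g t \<ge> 0)"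
proof -
  obtain t0 where t0: "t0 \<in> {0..T}" "\<And>y. y \<in> {0..T} \<Longrightarrow> g y \<le> g t0"
    using continuous_attains_sup[OF compact_Icc _ assms(1)] assms(2) by auto
  have "(SUP t\<in>{0..T}. g t) = g t0" by (rule cSup_eq_maximum) (use t0 in auto)
  then show ?thesis using t0 by (metis order_trans)
qed

definition Pf :: "real \<Rightarrow> real \<Rightarrow> real \<Rightarrow> real \<Rightarrow> real \<Rightarrow> real" where
  "Pf \<mu> x0 c \<gamma> t = c * (\<gamma> - \<mu>) * exp (\<gamma> * t) * exp (\<mu> * t) - c * \<gamma> * exp (\<gamma> * t) / exp (\<mu> * t) + x0 * \<mu>"

lemma alg_rate:
  fixes E1 E2 c x0 \<gamma> \<mu> :: real
  assumes "E1 > 0"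
  shows "((c * (E2 * \<gamma>) - x0 * (E1 * \<mu>)) * (c * E2 - x0 * E1) + (c * (E2 * \<gamma>) - x0 * (E1 * \<mu>)) * (c * E2 - x0 * E1)) * (E1 * E1 - 1)
      - (E1 * E1 * (2 * \<mu>) - 0) * ((c * E2 - x0 * E1) * (c * E2 - x0 * E1))
    = 2 * (c * E2 - x0 * E1) * E1 * (c * (\<gamma> - \<mu>) * E2 * E1 - c * \<gamma> * E2 / E1 + x0 * \<mu>)"
  using assms by (simp add: field_simps)

lemma rate_deriv:
  fixes \<mu> \<sigma> x0 c \<gamma> t :: real
  assumes mu: "\<mu> > 0" and t: "t > 0"
  shows "DERIV (rate_fn \<mu> \<sigma> x0 c \<gamma>) t :>
    (\<mu> / \<sigma>\<^sup>2) * ((2 * (c * exp (\<gamma> * t) - x0 * exp (\<mu> * t)) * exp (\<mu> * t) * Pf \<mu> x0 c \<gamma> t) / (exp (2 * \<mu> * t) - 1) ^ Suc (Suc 0))"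
proof -
  define A where "A t = c * exp (\<gamma> * t) - x0 * exp (\<mu> * t)" for t
  define D where "D t = exp (2 * \<mu> * t) - 1" for t
  have dA: "DERIV A t :> c * (exp (\<gamma> * t) * \<gamma>) - x0 * (exp (\<mu> * t) * \<mu>)"
    unfolding A_def by (intro DERIV_diff DERIV_cmult DERIV_fun_exp DERIV_cmult_Id)
  have dD: "DERIV D t :> exp (2 * \<mu> * t) * (2 * \<mu>) - 0"
    unfolding D_def by (intro DERIV_diff DERIV_fun_exp DERIV_cmult_Id DERIV_const)
  have Dnz: "D t \<noteq> 0" using mu t by (simp add: D_def)
  have dAA: "DERIV (\<lambda>t. A t * A t) t :> (c * (exp (\<gamma> * t) * \<gamma>) - x0 * (exp (\<mu> * t) * \<mu>)) * A t + (c * (exp (\<gamma> * t) * \<gamma>) - x0 * (exp (\<mu> * t) * \<mu>)) * A t"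
    by (rule DERIV_mult[OF dA dA])
  have dq: "DERIV (\<lambda>t. A t * A t / D t) t :>
      (((c * (exp (\<gamma> * t) * \<gamma>) - x0 * (exp (\<mu> * t) * \<mu>)) * A t + (c * (exp (\<gamma> * t) * \<gamma>) - x0 * (exp (\<mu> * t) * \<mu>)) * A t) * D t
        - (exp (2 * \<mu> * t) * (2 * \<mu>) - 0) * (A t * A t)) / (D t ^ Suc (Suc 0))"
    by (rule DERIV_quotient[OF dAA dD Dnz])
  have dc: "DERIV (\<lambda>t. (\<mu> / \<sigma>\<^sup>2) * (A t * A t / D t)) t :>
      (\<mu> / \<sigma>\<^sup>2) * ((((c * (exp (\<gamma> * t) * \<gamma>) - x0 * (exp (\<mu> * t) * \<mu>)) * A t + (c * (exp (\<gamma> * t) * \<gamma>) - x0 * (exp (\<mu> * t) * \<mu>)) * A t) * D t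
        - (exp (2 * \<mu> * t) * (2 * \<mu>) - 0) * (A t * A t)) / (D t ^ Suc (Suc 0)))"
    by (rule DERIV_cmult[OF dq])
  have feq: "rate_fn \<mu> \<sigma> x0 c \<gamma> = (\<lambda>t. (\<mu> / \<sigma>\<^sup>2) * (A t * A t / D t))"
    by (simp add: fun_eq_iff rate_fn_def A_def D_def power2_eq_square)
  have e2: "exp (2 * \<mu> * t) = exp (\<mu> * t) * exp (\<mu> * t)" by (simp add: exp_add[symmetric])
  have num: "(((c * (exp (\<gamma> * t) * \<gamma>) - x0 * (exp (\<mu> * t) * \<mu>)) * A t + (c * (exp (\<gamma> * t) * \<gamma>) - x0 * (exp (\<mu> * t) * \<mu>)) * A t) * D t
        - (exp (2 * \<mu> * t) * (2 * \<mu>) - 0) * (A t * A t))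
      = 2 * (c * exp (\<gamma> * t) - x0 * exp (\<mu> * t)) * exp (\<mu> * t) * Pf \<mu> x0 c \<gamma> t"
    unfolding A_def D_def Pf_def e2 by (rule alg_rate) simp
  show ?thesis using dc unfolding feq num by (simp add: D_def)
qed

lemma rate_dec:
  fixes \<mu> \<sigma> x0 c \<gamma> a b :: real
  assumes mu: "\<mu> > 0" and ab: "0 < a" "a \<le> b"
    and sgn: "\<And>t. a \<le> t \<Longrightarrow> t \<le> b \<Longrightarrow> (c * exp (\<gamma> * t) - x0 * exp (\<mu> * t)) * Pf \<mu> x0 c \<gamma> t \<le> 0"
  shows "rate_fn \<mu> \<sigma> x0 c \<gamma> b \<le> rate_fn \<mu> \<sigma> x0 c \<gamma> a"
proof (rule DERIV_nonpos_imp_nonincreasing[OF ab(2)])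
  fix t assume t: "a \<le> t" "t \<le> b"
  let ?d = "(\<mu> / \<sigma>\<^sup>2) * ((2 * (c * exp (\<gamma> * t) - x0 * exp (\<mu> * t)) * exp (\<mu> * t) * Pf \<mu> x0 c \<gamma> t) / (exp (2 * \<mu> * t) - 1) ^ Suc (Suc 0))"
  have "DERIV (rate_fn \<mu> \<sigma> x0 c \<gamma>) t :> ?d" by (rule rate_deriv[OF mu]) (use ab t in auto)
  moreover have "?d \<le> 0"
  proof -
    have "2 * (c * exp (\<gamma> * t) - x0 * exp (\<mu> * t)) * exp (\<mu> * t) * Pf \<mu> x0 c \<gamma> t
        = (2 * exp (\<mu> * t)) * ((c * exp (\<gamma> * t) - x0 * exp (\<mu> * t)) * Pf \<mu> x0 c \<gamma> t)" by (simp add: mult_ac)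
    also have "\<dots> \<le> 0" using sgn[OF t] by (simp add: mult_nonneg_nonpos)
    finally have "2 * (c * exp (\<gamma> * t) - x0 * exp (\<mu> * t)) * exp (\<mu> * t) * Pf \<mu> x0 c \<gamma> t \<le> 0" .
    then have "(2 * (c * exp (\<gamma> * t) - x0 * exp (\<mu> * t)) * exp (\<mu> * t) * Pf \<mu> x0 c \<gamma> t) / (exp (2 * \<mu> * t) - 1) ^ Suc (Suc 0) \<le> 0"
      by (simp add: divide_nonpos_nonneg)
    then show ?thesis using mu by (intro mult_nonneg_nonpos) simp_all
  qed
  ultimately show "\<exists>y. DERIV (rate_fn \<mu> \<sigma> x0 c \<gamma>) t :> y \<and> y \<le> 0" by blast
qed

lemma rate_inc:
  fixes \<mu> \<sigma> x0 c \<gamma> a b :: real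
  assumes mu: "\<mu> > 0" and ab: "0 < a" "a \<le> b"
    and sgn: "\<And>t. a \<le> t \<Longrightarrow> t \<le> b \<Longrightarrow> (c * exp (\<gamma> * t) - x0 * exp (\<mu> * t)) * Pf \<mu> x0 c \<gamma> t \<ge> 0"
  shows "rate_fn \<mu> \<sigma> x0 c \<gamma> a \<le> rate_fn \<mu> \<sigma> x0 c \<gamma> b"
proof (rule DERIV_nonneg_imp_nondecreasing[OF ab(2)])
  fix t assume t: "a \<le> t" "t \<le> b"
  let ?d = "(\<mu> / \<sigma>\<^sup>2) * ((2 * (c * exp (\<gamma> * t) - x0 * exp (\<mu> * t)) * exp (\<mu> * t) * Pf \<mu> x0 c \<gamma> t) / (exp (2 * \<mu> * t) - 1) ^ Suc (Suc 0))"
  have "DERIV (rate_fn \<mu> \<sigma> x0 c \<gamma>) t :> ?d" by (rule rate_deriv[OF mu]) (use ab t in auto)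
  moreover have "?d \<ge> 0"
  proof -
    have "2 * (c * exp (\<gamma> * t) - x0 * exp (\<mu> * t)) * exp (\<mu> * t) * Pf \<mu> x0 c \<gamma> t
        = (2 * exp (\<mu> * t)) * ((c * exp (\<gamma> * t) - x0 * exp (\<mu> * t)) * Pf \<mu> x0 c \<gamma> t)" by (simp add: mult_ac)
    also have "\<dots> \<ge> 0" using sgn[OF t] by simp
    finally have "2 * (c * exp (\<gamma> * t) - x0 * exp (\<mu> * t)) * exp (\<mu> * t) * Pf \<mu> x0 c \<gamma> t \<ge> 0" .
    then have "(2 * (c * exp (\<gamma> * t) - x0 * exp (\<mu> * t)) * exp (\<mu> * t) * Pf \<mu> x0 c \<gamma> t) / (exp (2 * \<mu> * t) - 1) ^ Suc (Suc 0) \<ge> 0"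
      by simp
    then show ?thesis using mu by (intro mult_nonneg_nonneg) simp_all
  qed
  ultimately show "\<exists>y. DERIV (rate_fn \<mu> \<sigma> x0 c \<gamma>) t :> y \<and> y \<ge> 0" by blast
qed

lemma phiV_strict:
  fixes \<mu> \<beta> :: real
  assumes mu: "\<mu> > 0" and b: "0 \<le> \<beta>" "\<beta> < \<mu>" and st: "0 \<le> s" "s < t"
  shows "phi_V \<mu> \<beta> s < phi_V \<mu> \<beta> t"
proof (rule DERIV_pos_imp_increasing[OF st(2)])
  fix x assume x: "s \<le> x" "x \<le> t"
  let ?d = "(1 - \<beta>/\<mu>) * (exp ((\<mu> + \<beta>) * x) * (\<mu> + \<beta>)) + (\<beta>/\<mu>) * (exp ((\<beta> - \<mu>) * x) * (\<beta> - \<mu>))"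
  have "DERIV (phi_V \<mu> \<beta>) x :> ?d"
    unfolding phi_V_def[abs_def] by (intro DERIV_add DERIV_cmult DERIV_fun_exp DERIV_cmult_Id)
  moreover have "?d > 0"
  proof -
    have x0: "x \<ge> 0" using x st by simp
    have "\<beta>/\<mu> \<le> 1" using mu b by simp
    then have c1: "0 \<le> (1 - \<beta>/\<mu>) * (\<mu> + \<beta>)" using mu b by (intro mult_nonneg_nonneg) auto
    have "(1 - \<beta>/\<mu>) * (\<mu> + \<beta>) * 1 \<le> (1 - \<beta>/\<mu>) * (\<mu> + \<beta>) * exp ((\<mu> + \<beta>) * x)"
      using c1 mu b x0 by (intro mult_left_mono) auto
    moreover have "(\<beta>/\<mu>) * (\<beta> - \<mu>) * 1 \<le> (\<beta>/\<mu>) * (\<beta> - \<mu>) * exp ((\<beta> - \<mu>) * x)"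
    proof (rule mult_left_mono_neg)
      show "exp ((\<beta> - \<mu>) * x) \<le> 1" using b x0 by (simp add: mult_nonpos_nonneg)
      have "0 \<le> \<beta> / \<mu>" using mu b by simp
      then show "\<beta> / \<mu> * (\<beta> - \<mu>) \<le> 0" using b by (intro mult_nonneg_nonpos) auto
    qed
    moreover have "(1 - \<beta>/\<mu>) * (\<mu> + \<beta>) + (\<beta>/\<mu>) * (\<beta> - \<mu>) = \<mu> - \<beta>"
      using mu by (simp add: field_simps power2_eq_square)
    ultimately have "\<mu> - \<beta> \<le> ?d" by (simp add: mult_ac)
    then show ?thesis using b by simp
  qed
  ultimately show "\<exists>y. DERIV (phi_V \<mu> \<beta>) x :> y \<and> 0 < y" by blast
qed

lemma phiV_mono:
  fixes \<mu> \<beta> :: real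
  assumes "\<mu> > 0" "0 \<le> \<beta>" "\<beta> < \<mu>" "0 \<le> s" "s \<le> t"
  shows "phi_V \<mu> \<beta> s \<le> phi_V \<mu> \<beta> t"
  using phiV_strict[of \<mu> \<beta> s t] assms by (cases "s = t") auto

lemma phiV_cont: "continuous_on S (phi_V \<mu> \<beta>)"
  unfolding phi_V_def[abs_def] by (intro continuous_intros)

lemma phiV_zero: "phi_V \<mu> \<beta> 0 = 1" by (simp add: phi_V_def)

lemma toV_exists:
  fixes \<mu> \<beta> v0 x0 :: real
  assumes mu: "\<mu> > 0" and b: "0 \<le> \<beta>" "\<beta> < \<mu>" and v: "0 < v0" "v0 < x0"
  shows "\<exists>!t. t > 0 \<and> phi_V \<mu> \<beta> t = x0 / v0"
proof -
  define t1 where "t1 = (x0 / v0) / (\<mu> - \<beta>)"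
  have t1: "t1 > 0" using v b by (simp add: t1_def)
  have "x0 / v0 \<le> phi_V \<mu> \<beta> t1"
  proof -
    have m1: "(1 - \<beta>/\<mu>) * \<mu> = \<mu> - \<beta>" using mu by (simp add: field_simps)
    have "(1 - \<beta>/\<mu>) * (\<mu> * t1) = (\<mu> - \<beta>) * t1" using m1 by (simp add: mult.assoc[symmetric])
    also have "\<dots> = x0 / v0" using b by (simp add: t1_def)
    finally have "x0 / v0 = (1 - \<beta>/\<mu>) * (\<mu> * t1)" by simp
    also have "\<dots> \<le> (1 - \<beta>/\<mu>) * (1 + (\<mu> + \<beta>) * t1)"
      using mu b t1 by (intro mult_left_mono) (auto simp: field_simps)
    also have "\<dots> \<le> (1 - \<beta>/\<mu>) * exp ((\<mu> + \<beta>) * t1)"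
      using mu b by (intro mult_left_mono) (auto simp: field_simps)
    also have "\<dots> \<le> phi_V \<mu> \<beta> t1" unfolding phi_V_def using mu b by simp
    finally show ?thesis .
  qed
  moreover have "phi_V \<mu> \<beta> 0 \<le> x0 / v0" using v by (simp add: phiV_zero)
  ultimately obtain t where t: "0 \<le> t" "t \<le> t1" "phi_V \<mu> \<beta> t = x0 / v0"
    using IVT'[of "phi_V \<mu> \<beta>" 0 "x0 / v0" t1] t1 phiV_cont by auto
  have "t \<noteq> 0" using t(3) v by (auto simp: phiV_zero)
  then have tp: "t > 0" using t by simp
  show ?thesis
  proof (rule ex1I[of _ t])
    show "t > 0 \<and> phi_V \<mu> \<beta> t = x0 / v0" using tp t by simp
    fix s assume s: "s > 0 \<and> phi_V \<mu> \<beta> s = x0 / v0"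
    show "s = t"
    proof (rule ccontr)
      assume "s \<noteq> t"
      then have "s < t \<or> t < s" by auto
      then show False using phiV_strict[OF mu b, of s t] phiV_strict[OF mu b, of t s] s t tp by auto
    qed
  qed
qed

lemma Pf_V: "\<mu> > 0 \<Longrightarrow> Pf \<mu> x0 v0 \<beta> t = \<mu> * (x0 - v0 * phi_V \<mu> \<beta> t)"
proof -
  assume mu: "\<mu> > 0"
  have e1: "exp ((\<mu> + \<beta>) * t) = exp (\<beta> * t) * exp (\<mu> * t)" by (simp add: exp_add[symmetric] algebra_simps)
  have e2: "exp ((\<beta> - \<mu>) * t) = exp (\<beta> * t) / exp (\<mu> * t)" by (simp add: exp_diff[symmetric] algebra_simps)
  show ?thesis unfolding Pf_def phi_V_def e1 e2 using mu by (simp add: field_simps)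
qed

lemma rate_min_V:
  fixes \<mu> \<sigma> \<beta> v0 x0 T :: real
  assumes mu: "\<mu> > 0" and b: "0 \<le> \<beta>" "\<beta> < \<mu>" and v: "0 < v0" "v0 < x0" and T: "T > 0"
    and to: "to > 0" "phi_V \<mu> \<beta> to = x0 / v0"
    and t: "t \<in> {0<..T}"
  shows "rate_fn \<mu> \<sigma> x0 v0 \<beta> (min T to) \<le> rate_fn \<mu> \<sigma> x0 v0 \<beta> t"
proof -
  have A: "v0 * exp (\<beta> * s) - x0 * exp (\<mu> * s) < 0" if "s \<ge> 0" for s
  proof -
    have "exp (\<beta> * s) \<le> exp (\<mu> * s)" using b that by (simp add: mult_right_mono)
    then have "v0 * exp (\<beta> * s) \<le> v0 * exp (\<mu> * s)" using v by simp
    also have "\<dots> < x0 * exp (\<mu> * s)" using v by simp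
    finally show ?thesis by simp
  qed
  show ?thesis
  proof (cases "t \<le> min T to")
    case True
    show ?thesis
    proof (rule rate_dec[OF mu])
      show "0 < t" "t \<le> min T to" using t True by auto
      fix s assume s: "t \<le> s" "s \<le> min T to"
      have "phi_V \<mu> \<beta> s \<le> phi_V \<mu> \<beta> to" using s t by (intro phiV_mono[OF mu b]) auto
      then have "Pf \<mu> x0 v0 \<beta> s \<ge> 0" unfolding Pf_V[OF mu] using mu v to
        by (simp add: field_simps)
      moreover have "v0 * exp (\<beta> * s) - x0 * exp (\<mu> * s) < 0" using A[of s] s t by simp
      ultimately show "(v0 * exp (\<beta> * s) - x0 * exp (\<mu> * s)) * Pf \<mu> x0 v0 \<beta> s \<le> 0"
        by (simp add: mult_nonpos_nonneg)
    qed
  next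
    case False
    then have L: "min T to = to" "to < t" using t by (auto simp: min_def split: if_splits)
    show ?thesis unfolding L(1)
    proof (rule rate_inc[OF mu to(1)])
      show "to \<le> t" using L by simp
      fix s assume s: "to \<le> s" "s \<le> t"
      have "phi_V \<mu> \<beta> to \<le> phi_V \<mu> \<beta> s" using s to by (intro phiV_mono[OF mu b]) auto
      then have "Pf \<mu> x0 v0 \<beta> s \<le> 0" unfolding Pf_V[OF mu] using mu v to
        by (simp add: field_simps mult_nonneg_nonpos)
      moreover have "v0 * exp (\<beta> * s) - x0 * exp (\<mu> * s) < 0" using A[of s] s to by simp
      ultimately show "(v0 * exp (\<beta> * s) - x0 * exp (\<mu> * s)) * Pf \<mu> x0 v0 \<beta> s \<ge> 0"
        by (simp add: mult_nonpos_nonpos)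
    qed
  qed
qed

lemma phiU_strict:
  fixes \<mu> \<alpha> :: real
  assumes mu: "\<mu> > 0" and a: "\<mu> < \<alpha>" and st: "0 \<le> s" "s < t"
  shows "phi_U \<mu> \<alpha> t < phi_U \<mu> \<alpha> s"
proof -
  have "(\<lambda>x. - phi_U \<mu> \<alpha> x) s < (\<lambda>x. - phi_U \<mu> \<alpha> x) t"
  proof (rule DERIV_pos_imp_increasing[OF st(2)])
    fix x assume x: "s \<le> x" "x \<le> t"
    let ?d = "- ((\<alpha>/\<mu>) * (exp ((\<alpha> - \<mu>) * x) * (\<alpha> - \<mu>)) - (\<alpha>/\<mu> - 1) * (exp ((\<mu> + \<alpha>) * x) * (\<mu> + \<alpha>)))"
    have "DERIV (\<lambda>x. - phi_U \<mu> \<alpha> x) x :> ?d"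
      unfolding phi_U_def by (intro DERIV_minus DERIV_diff DERIV_cmult DERIV_fun_exp DERIV_cmult_Id)
    moreover have "?d > 0"
    proof -
      have x0: "x \<ge> 0" using x st by simp
      define Ea where "Ea = exp ((\<alpha> - \<mu>) * x)"
      define Eb where "Eb = exp ((\<mu> + \<alpha>) * x)"
      define K1 where "K1 = (\<alpha>/\<mu>) * (\<alpha> - \<mu>)"
      define K2 where "K2 = (\<alpha>/\<mu> - 1) * (\<mu> + \<alpha>)"
      have deq: "?d = K2 * Eb - K1 * Ea" unfolding K1_def K2_def Ea_def[symmetric] Eb_def[symmetric]
        using mu by (simp add: field_simps)
      have c1: "0 \<le> K1" using mu a by (simp add: K1_def)
      have "Ea \<le> Eb" unfolding Ea_def Eb_def using mu x0 by (intro exp_mono mult_right_mono) auto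
      then have "K1 * Ea \<le> K1 * Eb" using c1 by (intro mult_left_mono) auto
      moreover have "K2 - K1 = \<alpha> - \<mu>" using mu by (simp add: K1_def K2_def field_simps power2_eq_square)
      moreover have "K2 * Eb - K1 * Eb = (K2 - K1) * Eb" by (simp add: algebra_simps)
      moreover have "(\<alpha> - \<mu>) * 1 \<le> (\<alpha> - \<mu>) * Eb" unfolding Eb_def using a mu x0 by (intro mult_left_mono) auto
      ultimately have "(\<alpha> - \<mu>) \<le> ?d" unfolding deq by simp
      then show ?thesis using a by simp
    qed
    ultimately show "\<exists>y. DERIV (\<lambda>x. - phi_U \<mu> \<alpha> x) x :> y \<and> 0 < y" by blast
  qed
  then show ?thesis by simp
qed

lemma phiU_mono:
  fixes \<mu> \<alpha> :: real
  assumes "\<mu> > 0" "\<mu> < \<alpha>" "0 \<le> s" "s \<le> t"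
  shows "phi_U \<mu> \<alpha> t \<le> phi_U \<mu> \<alpha> s"
  using phiU_strict[of \<mu> \<alpha> s t] assms by (cases "s = t") auto

lemma phiU_cont: "continuous_on S (phi_U \<mu> \<alpha>)"
  unfolding phi_U_def[abs_def] by (intro continuous_intros)

lemma phiU_zero: "phi_U \<mu> \<alpha> 0 = 1" by (simp add: phi_U_def)

lemma toU_exists:
  fixes \<mu> \<alpha> u0 x0 :: real
  assumes mu: "\<mu> > 0" and a: "\<mu> < \<alpha>" and u: "0 < x0" "x0 < u0"
  shows "\<exists>!t. t > 0 \<and> phi_U \<mu> \<alpha> t = x0 / u0"
proof -
  define t1 where "t1 = 1 / (2 * (\<alpha> - \<mu>))"
  have t1: "t1 > 0" using a by (simp add: t1_def)
  have "phi_U \<mu> \<alpha> t1 \<le> x0 / u0"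
  proof -
    have e: "exp ((\<mu> + \<alpha>) * t1) = exp ((\<alpha> - \<mu>) * t1) * exp (2 * \<mu> * t1)"
      by (simp add: exp_add[symmetric] algebra_simps)
    have "\<alpha> / (\<alpha> - \<mu>) = 1 + 2 * \<mu> * t1" using a by (simp add: t1_def field_simps)
    also have "\<dots> \<le> exp (2 * \<mu> * t1)" by (rule exp_ge_add_one_self)
    finally have g: "\<alpha> / (\<alpha> - \<mu>) \<le> exp (2 * \<mu> * t1)" .
    have c: "(\<alpha>/\<mu> - 1) * (\<alpha> / (\<alpha> - \<mu>)) = \<alpha> / \<mu>" using mu a by (simp add: field_simps)
    have nn: "0 \<le> \<alpha>/\<mu> - 1" using mu a by (simp add: field_simps)
    have "(\<alpha>/\<mu> - 1) * (\<alpha> / (\<alpha> - \<mu>)) \<le> (\<alpha>/\<mu> - 1) * exp (2 * \<mu> * t1)"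
      using g nn by (rule mult_left_mono)
    then have "\<alpha>/\<mu> \<le> (\<alpha>/\<mu> - 1) * exp (2 * \<mu> * t1)" using c by simp
    then have "\<alpha>/\<mu> - (\<alpha>/\<mu> - 1) * exp (2 * \<mu> * t1) \<le> 0" by simp
    then have "exp ((\<alpha> - \<mu>) * t1) * (\<alpha>/\<mu> - (\<alpha>/\<mu> - 1) * exp (2 * \<mu> * t1)) \<le> 0"
      by (simp add: mult_nonneg_nonpos)
    moreover have "phi_U \<mu> \<alpha> t1 = exp ((\<alpha> - \<mu>) * t1) * (\<alpha>/\<mu> - (\<alpha>/\<mu> - 1) * exp (2 * \<mu> * t1))"
    proof -
      have "phi_U \<mu> \<alpha> t1 = (\<alpha>/\<mu>) * exp ((\<alpha> - \<mu>) * t1) - (\<alpha>/\<mu> - 1) * (exp ((\<alpha> - \<mu>) * t1) * exp (2 * \<mu> * t1))"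
        by (simp only: phi_U_def e)
      then show ?thesis by (simp only: right_diff_distrib mult_ac)
    qed
    ultimately have "phi_U \<mu> \<alpha> t1 \<le> 0" by simp
    also have "0 \<le> x0 / u0" using u by simp
    finally show ?thesis .
  qed
  moreover have "x0 / u0 \<le> phi_U \<mu> \<alpha> 0" using u by (simp add: phiU_zero)
  ultimately obtain t where t: "0 \<le> t" "t \<le> t1" "phi_U \<mu> \<alpha> t = x0 / u0"
    using IVT2'[of "phi_U \<mu> \<alpha>" t1 "x0 / u0" 0] t1 phiU_cont by auto
  have "t \<noteq> 0" using t(3) u by (auto simp: phiU_zero)
  then have tp: "t > 0" using t by simp
  show ?thesis
  proof (rule ex1I[of _ t])
    show "t > 0 \<and> phi_U \<mu> \<alpha> t = x0 / u0" using tp t by simp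
    fix s assume s: "s > 0 \<and> phi_U \<mu> \<alpha> s = x0 / u0"
    show "s = t"
    proof (rule ccontr)
      assume "s \<noteq> t"
      then have "s < t \<or> t < s" by auto
      then show False using phiU_strict[OF mu a, of s t] phiU_strict[OF mu a, of t s] s t tp by auto
    qed
  qed
qed

lemma Pf_U: "\<mu> > 0 \<Longrightarrow> Pf \<mu> x0 u0 \<alpha> t = \<mu> * (x0 - u0 * phi_U \<mu> \<alpha> t)"
proof -
  assume mu: "\<mu> > 0"
  have e1: "exp ((\<mu> + \<alpha>) * t) = exp (\<alpha> * t) * exp (\<mu> * t)" by (simp add: exp_add[symmetric] algebra_simps)
  have e2: "exp ((\<alpha> - \<mu>) * t) = exp (\<alpha> * t) / exp (\<mu> * t)" by (simp add: exp_diff[symmetric] algebra_simps)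
  show ?thesis unfolding Pf_def phi_U_def e1 e2 using mu by (simp add: field_simps)
qed

lemma rate_min_U:
  fixes \<mu> \<sigma> \<alpha> u0 x0 T :: real
  assumes mu: "\<mu> > 0" and a: "\<mu> < \<alpha>" and u: "0 < x0" "x0 < u0" and T: "T > 0"
    and to: "to > 0" "phi_U \<mu> \<alpha> to = x0 / u0"
    and t: "t \<in> {0<..T}"
  shows "rate_fn \<mu> \<sigma> x0 u0 \<alpha> (min T to) \<le> rate_fn \<mu> \<sigma> x0 u0 \<alpha> t"
proof -
  have A: "u0 * exp (\<alpha> * s) - x0 * exp (\<mu> * s) > 0" if "s \<ge> 0" for s
  proof -
    have "exp (\<mu> * s) \<le> exp (\<alpha> * s)" using a that by (simp add: mult_right_mono)
    then have "x0 * exp (\<mu> * s) \<le> x0 * exp (\<alpha> * s)" using u by simp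
    also have "\<dots> < u0 * exp (\<alpha> * s)" using u by simp
    finally show ?thesis by simp
  qed
  show ?thesis
  proof (cases "t \<le> min T to")
    case True
    show ?thesis
    proof (rule rate_dec[OF mu])
      show "0 < t" "t \<le> min T to" using t True by auto
      fix s assume s: "t \<le> s" "s \<le> min T to"
      have "phi_U \<mu> \<alpha> to \<le> phi_U \<mu> \<alpha> s" using s t by (intro phiU_mono[OF mu a]) auto
      then have "Pf \<mu> x0 u0 \<alpha> s \<le> 0" unfolding Pf_U[OF mu] using mu u to
        by (simp add: field_simps mult_nonneg_nonpos)
      moreover have "u0 * exp (\<alpha> * s) - x0 * exp (\<mu> * s) > 0" using A[of s] s t by simp
      ultimately show "(u0 * exp (\<alpha> * s) - x0 * exp (\<mu> * s)) * Pf \<mu> x0 u0 \<alpha> s \<le> 0"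
        by (simp add: mult_nonneg_nonpos)
    qed
  next
    case False
    then have L: "min T to = to" "to < t" using t by (auto simp: min_def split: if_splits)
    show ?thesis unfolding L(1)
    proof (rule rate_inc[OF mu to(1)])
      show "to \<le> t" using L by simp
      fix s assume s: "to \<le> s" "s \<le> t"
      have "phi_U \<mu> \<alpha> s \<le> phi_U \<mu> \<alpha> to" using s to by (intro phiU_mono[OF mu a]) auto
      then have "Pf \<mu> x0 u0 \<alpha> s \<ge> 0" unfolding Pf_U[OF mu] using mu u to
        by (simp add: field_simps)
      moreover have "u0 * exp (\<alpha> * s) - x0 * exp (\<mu> * s) > 0" using A[of s] s to by simp
      ultimately show "(u0 * exp (\<alpha> * s) - x0 * exp (\<mu> * s)) * Pf \<mu> x0 u0 \<alpha> s \<ge> 0"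
        by simp
    qed
  qed
qed

context core begin

lemma F_rate:
  assumes bexp: "\<And>t. b t = c * exp (\<gamma> * t)" and t: "t > 0"
  shows "F t = rate_fn \<mu> \<sigma> x0 c \<gamma> t"
proof -
  define E where "E = exp (\<mu> * t)"
  have E: "E > 1" using mu t by (simp add: E_def)
  have e1: "exp (- \<mu> * t) = 1 / E" by (simp add: E_def exp_minus field_simps)
  have e2: "exp (- 2 * \<mu> * t) = 1 / (E * E)" by (simp add: E_def exp_add[symmetric] exp_minus field_simps)
  have e3: "exp (2 * \<mu> * t) = E * E" by (simp add: E_def exp_add[symmetric])
  have hE: "c * exp (\<gamma> * t) - x0 * E = - E * h t"
    unfolding h_def e1 bexp using E by (simp add: field_simps)
  have "F t = (h t)\<^sup>2 / (2 * \<sigma>\<^sup>2 * ((1 - 1 / (E * E)) / (2 * \<mu>)))"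
    unfolding F_def tau_def e2 ..
  also have "\<dots> = \<mu> / \<sigma>\<^sup>2 * (- E * h t)\<^sup>2 / (E * E - 1)"
  proof -
    obtain D where D: "D = E * E - 1" by blast
    have Dp: "D > 0" using E D by (simp add: less_1_mult)
    have EE: "E * E = D + 1" using D by simp
    have "(- E * h t)\<^sup>2 = (E * E) * (h t)\<^sup>2" by (simp add: power2_eq_square)
    then show ?thesis unfolding EE using Dp mu sig by (simp add: field_simps)
  qed
  also have "\<dots> = rate_fn \<mu> \<sigma> x0 c \<gamma> t"
    unfolding rate_fn_def e3 E_def[symmetric] hE ..
  finally show ?thesis .
qed

end

lemma rate_fn_neg: "rate_fn \<mu> \<sigma> (- x0) (- c) \<gamma> s = rate_fn \<mu> \<sigma> x0 c \<gamma> s"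
  by (simp add: rate_fn_def power2_eq_square algebra_simps)

theorem theorem2:
  fixes M :: "'a measure" and W :: "real \<Rightarrow> 'a \<Rightarrow> real"
    and X :: "real \<Rightarrow> real \<Rightarrow> 'a \<Rightarrow> real"
    and \<mu> \<sigma> \<alpha> \<beta> v0 x0 u0 T :: real
  assumes "\<mu> > 0" "\<sigma> > 0" "0 \<le> \<beta>" "\<beta> < \<mu>" "\<mu> < \<alpha>"
    and "0 < v0" "v0 < x0" "x0 < u0" "T > 0"
    and BM: "std_brownian_motion M W"
    and sol: "\<And>\<epsilon>. \<epsilon> > 0 \<Longrightarrow> solves_linear_sde M W \<mu> \<sigma> \<epsilon> x0 (X \<epsilon>)"
  defines "V \<equiv> (\<lambda>t. v0 * exp (\<beta> * t))"
    and "U \<equiv> (\<lambda>t. u0 * exp (\<alpha> * t))"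
    and "toV \<equiv> (THE t. t > 0 \<and> phi_V \<mu> \<beta> t = x0 / v0)"
    and "toU \<equiv> (THE t. t > 0 \<and> phi_U \<mu> \<alpha> t = x0 / u0)"
  shows "((\<lambda>\<epsilon>. \<epsilon> * ln (measure M {\<omega> \<in> space M. (INF t\<in>{0..T}. X \<epsilon> t \<omega> - V t) \<le> 0}))
            \<longlongrightarrow> - rate_fn \<mu> \<sigma> x0 v0 \<beta> (min T toV)) (at_right 0)
       \<and> ((\<lambda>\<epsilon>. \<epsilon> * ln (measure M {\<omega> \<in> space M. (SUP t\<in>{0..T}. X \<epsilon> t \<omega> - U t) \<ge> 0}))
            \<longlongrightarrow> - rate_fn \<mu> \<sigma> x0 u0 \<alpha> (min T toU)) (at_right 0)"
proof
  note a = assms(1-9)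
  have toV: "toV > 0" "phi_V \<mu> \<beta> toV = x0 / v0"
    using theI'[OF toV_exists[of \<mu> \<beta> v0 x0]] a unfolding toV_def by auto
  have toU: "toU > 0" "phi_U \<mu> \<alpha> toU = x0 / u0"
    using theI'[OF toU_exists[of \<mu> \<alpha> x0 u0]] a unfolding toU_def by auto
  have Vc: "continuous_on {0..T} V" unfolding V_def by (intro continuous_intros)
  have Uc: "continuous_on {0..T} U" unfolding U_def by (intro continuous_intros)
  have Lmin: "min T toV \<in> {0<..T}" "min T toU \<in> {0<..T}" using toV toU a by auto
  interpret cV: core M W \<mu> \<sigma> x0 T V X
  proof (unfold_locales)
    show "std_brownian_motion M W" by (rule BM)
    show "\<mu> > 0" "\<sigma> > 0" "T > 0" using a by auto
    show "continuous_on {0..T} V" unfolding V_def by (intro continuous_intros)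
    fix t :: real assume t: "t \<in> {0..T}"
    have "exp (- \<mu> * t) * V t = v0 * exp ((\<beta> - \<mu>) * t)"
      unfolding V_def by (simp add: exp_add[symmetric] algebra_simps)
    also have "\<dots> \<le> v0 * 1" using a t by (intro mult_left_mono) (auto simp: mult_nonpos_nonneg)
    finally show "x0 - exp (- \<mu> * t) * V t > 0" using a by simp
  next
    fix \<epsilon> :: real assume "\<epsilon> > 0" then show "solves_linear_sde M W \<mu> \<sigma> \<epsilon> x0 (X \<epsilon>)" by (rule sol)
  qed
  have limV: "((\<lambda>\<epsilon>. \<epsilon> * ln (measure M (cV.E \<epsilon>))) \<longlongrightarrow> - cV.F (min T toV)) (at_right 0)"
  proof (rule cV.core_limit[OF Lmin(1)])
    fix t assume t: "t \<in> {0<..T}"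
    have "cV.F (min T toV) = rate_fn \<mu> \<sigma> x0 v0 \<beta> (min T toV)"
      by (rule cV.F_rate) (use Lmin(1) in \<open>auto simp: V_def\<close>)
    also have "\<dots> \<le> rate_fn \<mu> \<sigma> x0 v0 \<beta> t" by (rule rate_min_V) (use a toV t in auto)
    also have "\<dots> = cV.F t" by (rule cV.F_rate[symmetric]) (use t in \<open>auto simp: V_def\<close>)
    finally show "cV.F (min T toV) \<le> cV.F t" .
  qed
  have FV: "cV.F (min T toV) = rate_fn \<mu> \<sigma> x0 v0 \<beta> (min T toV)"
    by (rule cV.F_rate) (use Lmin(1) in \<open>auto simp: V_def\<close>)
  have evV: "eventually (\<lambda>\<epsilon>. \<epsilon> * ln (measure M (cV.E \<epsilon>)) = \<epsilon> * ln (measure M {\<omega> \<in> space M. (INF t\<in>{0..T}. X \<epsilon> t \<omega> - V t) \<le> 0})) (at_right 0)"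
    unfolding eventually_at_right_field
  proof (intro exI[of _ 1] conjI allI impI)
    fix \<epsilon> :: real assume e: "0 < \<epsilon>" "\<epsilon> < 1"
    have "cV.E \<epsilon> = {\<omega> \<in> space M. (INF t\<in>{0..T}. X \<epsilon> t \<omega> - V t) \<le> 0}"
    proof (intro set_eqI iffI)
      fix \<omega> assume "\<omega> \<in> cV.E \<epsilon>"
      then have \<omega>: "\<omega> \<in> space M" and ex: "\<exists>t\<in>{0..T}. X \<epsilon> t \<omega> - V t \<le> 0" by (auto simp: cV.E_def)
      have "continuous_on {0..T} (\<lambda>t. X \<epsilon> t \<omega> - V t)"
        by (intro continuous_on_diff continuous_on_subset[OF cV.X_cont[OF _ \<omega>]] Vc) (use e in auto)
      then show "\<omega> \<in> {\<omega> \<in> space M. (INF t\<in>{0..T}. X \<epsilon> t \<omega> - V t) \<le> 0}"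
        using inf_le0_iff[of T "\<lambda>t. X \<epsilon> t \<omega> - V t"] ex \<omega> a by auto
    next
      fix \<omega> assume "\<omega> \<in> {\<omega> \<in> space M. (INF t\<in>{0..T}. X \<epsilon> t \<omega> - V t) \<le> 0}"
      then have \<omega>: "\<omega> \<in> space M" and inf: "(INF t\<in>{0..T}. X \<epsilon> t \<omega> - V t) \<le> 0" by auto
      have "continuous_on {0..T} (\<lambda>t. X \<epsilon> t \<omega> - V t)"
        by (intro continuous_on_diff continuous_on_subset[OF cV.X_cont[OF _ \<omega>]] Vc) (use e in auto)
      then have "\<exists>t\<in>{0..T}. X \<epsilon> t \<omega> - V t \<le> 0" using inf_le0_iff[of T "\<lambda>t. X \<epsilon> t \<omega> - V t"] inf a by auto
      then show "\<omega> \<in> cV.E \<epsilon>" using \<omega> by (auto simp: cV.E_def)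
    qed
    then show "\<epsilon> * ln (measure M (cV.E \<epsilon>)) = \<epsilon> * ln (measure M {\<omega> \<in> space M. (INF t\<in>{0..T}. X \<epsilon> t \<omega> - V t) \<le> 0})" by simp
  qed simp
  show "((\<lambda>\<epsilon>. \<epsilon> * ln (measure M {\<omega> \<in> space M. (INF t\<in>{0..T}. X \<epsilon> t \<omega> - V t) \<le> 0}))
            \<longlongrightarrow> - rate_fn \<mu> \<sigma> x0 v0 \<beta> (min T toV)) (at_right 0)"
    using Lim_transform_eventually[OF limV evV] unfolding FV .
  interpret cU: core M "\<lambda>t \<omega>. - W t \<omega>" \<mu> \<sigma> "- x0" T "\<lambda>t. - U t" "\<lambda>\<epsilon> t \<omega>. - X \<epsilon> t \<omega>"
  proof (unfold_locales)
    show "std_brownian_motion M (\<lambda>t \<omega>. - W t \<omega>)" by (rule bm_neg[OF BM])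
    show "\<mu> > 0" "\<sigma> > 0" "T > 0" using a by auto
    show "continuous_on {0..T} (\<lambda>t. - U t)" unfolding U_def by (intro continuous_intros)
    fix t :: real assume t: "t \<in> {0..T}"
    have "exp (- \<mu> * t) * U t = u0 * exp ((\<alpha> - \<mu>) * t)"
      unfolding U_def by (simp add: exp_add[symmetric] algebra_simps)
    moreover have "1 \<le> exp ((\<alpha> - \<mu>) * t)" using a t by simp
    then have "u0 * 1 \<le> u0 * exp ((\<alpha> - \<mu>) * t)" using a by (intro mult_left_mono) auto
    moreover have "- x0 - exp (- \<mu> * t) * (- U t) = exp (- \<mu> * t) * U t - x0" by simp
    ultimately show "- x0 - exp (- \<mu> * t) * (- U t) > 0" using a by linarith
  next
    fix \<epsilon> :: real assume "\<epsilon> > 0"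
    then show "solves_linear_sde M (\<lambda>t \<omega>. - W t \<omega>) \<mu> \<sigma> \<epsilon> (- x0) (\<lambda>t \<omega>. - X \<epsilon> t \<omega>)"
      by (intro sde_neg sol)
  qed
  have limU: "((\<lambda>\<epsilon>. \<epsilon> * ln (measure M (cU.E \<epsilon>))) \<longlongrightarrow> - cU.F (min T toU)) (at_right 0)"
  proof (rule cU.core_limit[OF Lmin(2)])
    fix t assume t: "t \<in> {0<..T}"
    have "cU.F (min T toU) = rate_fn \<mu> \<sigma> (- x0) (- u0) \<alpha> (min T toU)"
      by (rule cU.F_rate) (use Lmin(2) in \<open>auto simp: U_def\<close>)
    also have "\<dots> = rate_fn \<mu> \<sigma> x0 u0 \<alpha> (min T toU)" by (rule rate_fn_neg)
    also have "\<dots> \<le> rate_fn \<mu> \<sigma> x0 u0 \<alpha> t" by (rule rate_min_U) (use a toU t in auto)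
    also have "\<dots> = rate_fn \<mu> \<sigma> (- x0) (- u0) \<alpha> t" by (rule rate_fn_neg[symmetric])
    also have "\<dots> = cU.F t" by (rule cU.F_rate[symmetric]) (use t in \<open>auto simp: U_def\<close>)
    finally show "cU.F (min T toU) \<le> cU.F t" .
  qed
  have FU: "cU.F (min T toU) = rate_fn \<mu> \<sigma> x0 u0 \<alpha> (min T toU)"
  proof -
    have "cU.F (min T toU) = rate_fn \<mu> \<sigma> (- x0) (- u0) \<alpha> (min T toU)"
      by (rule cU.F_rate) (use Lmin(2) in \<open>auto simp: U_def\<close>)
    then show ?thesis by (simp add: rate_fn_neg)
  qed
  have evU: "eventually (\<lambda>\<epsilon>. \<epsilon> * ln (measure M (cU.E \<epsilon>)) = \<epsilon> * ln (measure M {\<omega> \<in> space M. (SUP t\<in>{0..T}. X \<epsilon> t \<omega> - U t) \<ge> 0})) (at_right 0)"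
    unfolding eventually_at_right_field
  proof (intro exI[of _ 1] conjI allI impI)
    fix \<epsilon> :: real assume e: "0 < \<epsilon>" "\<epsilon> < 1"
    have "cU.E \<epsilon> = {\<omega> \<in> space M. (SUP t\<in>{0..T}. X \<epsilon> t \<omega> - U t) \<ge> 0}"
    proof (intro set_eqI iffI)
      fix \<omega> assume "\<omega> \<in> cU.E \<epsilon>"
      then have \<omega>: "\<omega> \<in> space M" and ex: "\<exists>t\<in>{0..T}. X \<epsilon> t \<omega> - U t \<ge> 0" by (auto simp: cU.E_def)
      have "continuous_on {0..T} (\<lambda>t. X \<epsilon> t \<omega> - U t)"
        by (intro continuous_on_diff continuous_on_subset[OF cV.X_cont[OF _ \<omega>]] Uc) (use e in auto)
      then show "\<omega> \<in> {\<omega> \<in> space M. (SUP t\<in>{0..T}. X \<epsilon> t \<omega> - U t) \<ge> 0}"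
        using sup_ge0_iff[of T "\<lambda>t. X \<epsilon> t \<omega> - U t"] ex \<omega> a by auto
    next
      fix \<omega> assume "\<omega> \<in> {\<omega> \<in> space M. (SUP t\<in>{0..T}. X \<epsilon> t \<omega> - U t) \<ge> 0}"
      then have \<omega>: "\<omega> \<in> space M" and sup: "(SUP t\<in>{0..T}. X \<epsilon> t \<omega> - U t) \<ge> 0" by auto
      have "continuous_on {0..T} (\<lambda>t. X \<epsilon> t \<omega> - U t)"
        by (intro continuous_on_diff continuous_on_subset[OF cV.X_cont[OF _ \<omega>]] Uc) (use e in auto)
      then have "\<exists>t\<in>{0..T}. X \<epsilon> t \<omega> - U t \<ge> 0" using sup_ge0_iff[of T "\<lambda>t. X \<epsilon> t \<omega> - U t"] sup a by auto
      then show "\<omega> \<in> cU.E \<epsilon>" using \<omega> by (auto simp: cU.E_def)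
    qed
    then show "\<epsilon> * ln (measure M (cU.E \<epsilon>)) = \<epsilon> * ln (measure M {\<omega> \<in> space M. (SUP t\<in>{0..T}. X \<epsilon> t \<omega> - U t) \<ge> 0})" by simp
  qed simp
  show "((\<lambda>\<epsilon>. \<epsilon> * ln (measure M {\<omega> \<in> space M. (SUP t\<in>{0..T}. X \<epsilon> t \<omega> - U t) \<ge> 0}))
            \<longlongrightarrow> - rate_fn \<mu> \<sigma> x0 u0 \<alpha> (min T toU)) (at_right 0)"
    using Lim_transform_eventually[OF limU evU] unfolding FU .
qed

end
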